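(* Let $q\geq4$ be an even integer, $n=q^2-1$, and let $A_0=I,A_1,A_2,A_3$ be the adjacency matrices of a symmetric 3-class association scheme on $n$ points with first eigenmatrix \[ P=\begin{bmatrix}1&\frac{q^2}{2}-q&\frac{q^2}{2}&q-2\\ 1&\frac q2&-\frac q2&-1\\ 1&-\frac q2+1&-\frac q2&q-2\\ 1&-\frac q2&\frac q2&-1\end{bmatrix}. \] For $m=1,\dots,6$ let $W_m=A_0+w_1A_1+w_2A_2+w_3A_3$ where $(w_1,w_2,w_3)$ (nonzero complex numbers) satisfies condition $(m)$ of the following list (so that each $W_m$ is a type-II matrix): (1) $w_1=w_2=w_3$ and $w_3+\frac1{w_3}+q^2-3=0$; (2) $w_3+\frac1{w_3}+q^2-3=0$ and $w_1=w_2=\frac{-(q-3)w_3+(q-1)}{q^2-2q-1}$; (3) $w_1+\frac1{w_1}=\frac{2(q^2-6)}{q^2-4}$, $w_2=-1$, $w_3=w_1$; (4) $w_1=w_3=1$ and $w_2+\frac1{w_2}=\frac{-2(q^2-2)}{q^2}$; (5) $w_1+\frac1{w_1}=-\frac2q$, $w_2=\frac1{w_1}$, $w_3=1$; (6) for a real number $r$ with $r^2=(17q-1)(q-1)$, with $a_{0,1}=\frac{-(q-1)(q-2)+(q+2)r}{2q(q+1)}$, $a_{0,2}=\frac{(q+2)(q-1)-(q-2)r}{2q(q-3)}$, $a_{0,3}=\frac{5q^2-2q-19-(q-1)r}{2(q+1)(q-3)}$, $a_{1,2}=\frac{2(-q^4+2q^3+4q^2-10q+1+(q-1)r)}{q^2(q+1)(q-3)}$,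 $a_{1,3}=-a_{0,2}$: $w_1+\frac1{w_1}=a_{0,1}$ and $w_i=\frac{w_1^2-1}{a_{1,i}w_1-a_{0,i}}$ for $i=2,3$. Then $W_1,\dots,W_6$ are pairwise inequivalent.
   Context: A symmetric association scheme with adjacency matrices $A_0=I,\dots,A_d$: symmetric $(0,1)$-matrices summing to $J$ whose span is closed under multiplication; with primitive idempotents $E_0=\frac1nJ,\dots,E_d$, the first eigenmatrix is defined by $A_j=\sum_iP_{i,j}E_i$. A type-II matrix is an $n\times n$ matrix $W$ with nonzero complex entries and $W(W^{(-)})^\top=nI$, $W^{(-)}$ the entrywise inverse. Two type-II matrices $W_1,W_2$ are equivalent if there exist invertible diagonal matrices $D,D'$ and permutation matrices $T,T'$ with $DW_1D'=TW_2T'$. *)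

theory Defs
  imports "Jordan_Normal_Form.Matrix" "HOL-Combinatorics.Permutations"
begin

definition all_ones :: "nat \<Rightarrow> complex mat" where
  "all_ones n = mat n n (\<lambda>_. 1)"

definition msum :: "nat \<Rightarrow> (nat \<Rightarrow> complex mat) \<Rightarrow> nat set \<Rightarrow> complex mat" where
  "msum n M I = mat n n (\<lambda>(a,b). \<Sum>i\<in>I. M i $$ (a,b))"

definition in_span :: "nat \<Rightarrow> nat \<Rightarrow> (nat \<Rightarrow> complex mat) \<Rightarrow> complex mat \<Rightarrow> bool" where
  "in_span n d A X \<longleftrightarrow> (\<exists>c. X = msum n (\<lambda>k. c k \<cdot>\<^sub>m A k) {..d})"

definition sym_assoc_scheme :: "nat \<Rightarrow> nat \<Rightarrow> (nat \<Rightarrow> complex mat) \<Rightarrow> bool" where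
  "sym_assoc_scheme n d A \<longleftrightarrow>
     (\<forall>i\<le>d. A i \<in> carrier_mat n n \<and> transpose_mat (A i) = A i \<and> A i \<noteq> 0\<^sub>m n n
            \<and> (\<forall>a<n. \<forall>b<n. A i $$ (a,b) \<in> {0,1})) \<and>
     A 0 = 1\<^sub>m n \<and>
     msum n A {..d} = all_ones n \<and>
     (\<forall>i\<le>d. \<forall>j\<le>d. in_span n d A (A i * A j))"

definition first_eigenmatrix :: "nat \<Rightarrow> nat \<Rightarrow> (nat \<Rightarrow> complex mat) \<Rightarrow> (nat \<Rightarrow> nat \<Rightarrow> complex) \<Rightarrow> bool" where
  "first_eigenmatrix n d A P \<longleftrightarrow>
     (\<exists>E. E 0 = (1 / of_nat n) \<cdot>\<^sub>m all_ones n \<and>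
          (\<forall>i\<le>d. E i \<in> carrier_mat n n \<and> E i \<noteq> 0\<^sub>m n n \<and> in_span n d A (E i) \<and>
                 (\<forall>j\<le>d. E i * E j = (if i = j then E i else 0\<^sub>m n n))) \<and>
          msum n E {..d} = 1\<^sub>m n \<and>
          (\<forall>j\<le>d. A j = msum n (\<lambda>i. P i j \<cdot>\<^sub>m E i) {..d}))"

definition type_II :: "nat \<Rightarrow> complex mat \<Rightarrow> bool" where
  "type_II n W \<longleftrightarrow> W \<in> carrier_mat n n \<and> (\<forall>a<n. \<forall>b<n. W $$ (a,b) \<noteq> 0) \<and>
     W * transpose_mat (mat n n (\<lambda>(a,b). 1 / W $$ (a,b))) = of_nat n \<cdot>\<^sub>m 1\<^sub>m n"

definition invertible_diag :: "nat \<Rightarrow> complex mat \<Rightarrow> bool" where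
  "invertible_diag n D \<longleftrightarrow> D \<in> carrier_mat n n \<and> diagonal_mat D \<and> invertible_mat D"

definition perm_matrix :: "nat \<Rightarrow> complex mat \<Rightarrow> bool" where
  "perm_matrix n T \<longleftrightarrow> (\<exists>\<sigma>. \<sigma> permutes {..<n} \<and> T = mat n n (\<lambda>(i,j). if \<sigma> i = j then 1 else 0))"

definition typeII_equiv :: "nat \<Rightarrow> complex mat \<Rightarrow> complex mat \<Rightarrow> bool" where
  "typeII_equiv n W1 W2 \<longleftrightarrow>
     (\<exists>D D' T T'. invertible_diag n D \<and> invertible_diag n D' \<and> perm_matrix n T \<and> perm_matrix n T' \<and>
        D * W1 * D' = T * W2 * T')"

definition P_q :: "nat \<Rightarrow> nat \<Rightarrow> nat \<Rightarrow> complex" where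
  "P_q q i j = (let x = (of_nat q :: complex) in
     [[1, x^2/2 - x, x^2/2, x - 2],
      [1, x/2, -x/2, -1],
      [1, -x/2 + 1, -x/2, x - 2],
      [1, -x/2, x/2, -1]] ! i ! j)"

definition W_of :: "nat \<Rightarrow> (nat \<Rightarrow> complex mat) \<Rightarrow> complex \<Rightarrow> complex \<Rightarrow> complex \<Rightarrow> complex mat" where
  "W_of n A w1 w2 w3 = A 0 + w1 \<cdot>\<^sub>m A 1 + w2 \<cdot>\<^sub>m A 2 + w3 \<cdot>\<^sub>m A 3"

definition a01 :: "nat \<Rightarrow> real \<Rightarrow> complex" where
  "a01 q r = (let x = of_nat q; s = complex_of_real r in (-(x-1)*(x-2) + (x+2)*s) / (2*x*(x+1)))"
definition a02 :: "nat \<Rightarrow> real \<Rightarrow> complex" where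
  "a02 q r = (let x = of_nat q; s = complex_of_real r in ((x+2)*(x-1) - (x-2)*s) / (2*x*(x-3)))"
definition a03 :: "nat \<Rightarrow> real \<Rightarrow> complex" where
  "a03 q r = (let x = of_nat q; s = complex_of_real r in (5*x^2 - 2*x - 19 - (x-1)*s) / (2*(x+1)*(x-3)))"
definition a12 :: "nat \<Rightarrow> real \<Rightarrow> complex" where
  "a12 q r = (let x = of_nat q; s = complex_of_real r in
     2*(-(x^4) + 2*x^3 + 4*x^2 - 10*x + 1 + (x-1)*s) / (x^2*(x+1)*(x-3)))"
definition a13 :: "nat \<Rightarrow> real \<Rightarrow> complex" where
  "a13 q r = - a02 q r"

end

theory Submission
  imports Defs
begin


lemma scheme_basic:
  assumes S: "sym_assoc_scheme n 3 A" and k: "k \<le> 3"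
  shows "A k \<in> carrier_mat n n" "transpose_mat (A k) = A k" "A k \<noteq> 0\<^sub>m n n"
    "\<And>a b. a < n \<Longrightarrow> b < n \<Longrightarrow> A k $$ (a,b) \<in> {0,1}"
  using S k unfolding sym_assoc_scheme_def by auto

lemma scheme_sum:
  assumes S: "sym_assoc_scheme n 3 A" and ab: "a < n" "b < n"
  shows "A 0 $$ (a,b) + A 1 $$ (a,b) + A 2 $$ (a,b) + A 3 $$ (a,b) = 1"
proof -
  have "msum n A {..3} $$ (a,b) = all_ones n $$ (a,b)" using S unfolding sym_assoc_scheme_def by simp
  moreover have "{..3::nat} = {0,1,2,3}" by auto
  ultimately show ?thesis using ab by (simp add: msum_def all_ones_def add.assoc)
qed

lemma four01:
  fixes x0 x1 x2 x3 :: complex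
  assumes "x0 \<in> {0,1}" "x1 \<in> {0,1}" "x2 \<in> {0,1}" "x3 \<in> {0,1}" "x0+x1+x2+x3 = 1"
  shows "(x0=1\<and>x1=0\<and>x2=0\<and>x3=0) \<or> (x0=0\<and>x1=1\<and>x2=0\<and>x3=0) \<or>
         (x0=0\<and>x1=0\<and>x2=1\<and>x3=0) \<or> (x0=0\<and>x1=0\<and>x2=0\<and>x3=1)"
  using assms by auto

lemma scheme_rel:
  assumes S: "sym_assoc_scheme n 3 A" and ab: "a < n" "b < n"
  shows "\<exists>k\<le>3. A k $$ (a,b) = 1 \<and> (\<forall>j\<le>3. j \<noteq> k \<longrightarrow> A j $$ (a,b) = 0)"
proof -
  have s: "A 0 $$ (a,b) + A 1 $$ (a,b) + A 2 $$ (a,b) + A 3 $$ (a,b) = 1" by (rule scheme_sum[OF S ab])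
  have v: "\<And>k. k \<le> 3 \<Longrightarrow> A k $$ (a,b) \<in> {0,1}" using scheme_basic(4)[OF S _ ab] by blast
  have le3: "\<And>j::nat. j \<le> 3 \<longleftrightarrow> j = 0 \<or> j = 1 \<or> j = 2 \<or> j = 3" by auto
  have v0: "A 0 $$ (a,b) \<in> {0,1}" and v1: "A 1 $$ (a,b) \<in> {0,1}" and v2: "A 2 $$ (a,b) \<in> {0,1}"
    and v3: "A 3 $$ (a,b) \<in> {0,1}" using v by auto
  from four01[OF v0 v1 v2 v3 s]
  show ?thesis
  proof (elim disjE)
    assume h: "A 0 $$ (a,b) = 1 \<and> A 1 $$ (a,b) = 0 \<and> A 2 $$ (a,b) = 0 \<and> A 3 $$ (a,b) = 0"
    show ?thesis by (rule exI[of _ 0]) (use h in \<open>auto simp: le3\<close>)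
  next
    assume h: "A 0 $$ (a,b) = 0 \<and> A 1 $$ (a,b) = 1 \<and> A 2 $$ (a,b) = 0 \<and> A 3 $$ (a,b) = 0"
    show ?thesis by (rule exI[of _ 1]) (use h in \<open>auto simp: le3\<close>)
  next
    assume h: "A 0 $$ (a,b) = 0 \<and> A 1 $$ (a,b) = 0 \<and> A 2 $$ (a,b) = 1 \<and> A 3 $$ (a,b) = 0"
    show ?thesis by (rule exI[of _ 2]) (use h in \<open>auto simp: le3\<close>)
  next
    assume h: "A 0 $$ (a,b) = 0 \<and> A 1 $$ (a,b) = 0 \<and> A 2 $$ (a,b) = 0 \<and> A 3 $$ (a,b) = 1"
    show ?thesis by (rule exI[of _ 3]) (use h in \<open>auto simp: le3\<close>)
  qed
qed

lemma scheme_diag: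
  assumes S: "sym_assoc_scheme n 3 A" and a: "a < n"
  shows "A 0 $$ (a,a) = 1" "\<And>b. b < n \<Longrightarrow> b \<noteq> a \<Longrightarrow> A 0 $$ (a,b) = 0"
  using S a unfolding sym_assoc_scheme_def by auto

lemma scheme_sym:
  assumes S: "sym_assoc_scheme n 3 A" and k: "k \<le> 3" and ab: "a < n" "b < n"
  shows "A k $$ (b,a) = A k $$ (a,b)"
proof -
  have "transpose_mat (A k) $$ (a,b) = A k $$ (a,b)" using scheme_basic(2)[OF S k] by simp
  then show ?thesis using scheme_basic(1)[OF S k] ab by simp
qed

lemma scheme_nonempty:
  assumes S: "sym_assoc_scheme n 3 A" and k: "k \<le> 3"
  shows "\<exists>a<n. \<exists>b<n. A k $$ (a,b) = 1"
proof (rule ccontr)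
  assume "\<not> ?thesis"
  then have "\<And>a b. a < n \<Longrightarrow> b < n \<Longrightarrow> A k $$ (a,b) = 0"
    using scheme_basic(4)[OF S k] by blast
  then have "A k = 0\<^sub>m n n" using scheme_basic(1)[OF S k] by (intro eq_matI) auto
  with scheme_basic(3)[OF S k] show False by simp
qed

definition ent :: "complex \<Rightarrow> complex \<Rightarrow> complex \<Rightarrow> nat \<Rightarrow> complex" where
  "ent w1 w2 w3 k = (if k = 1 then w1 else if k = 2 then w2 else if k = 3 then w3 else 1)"

lemma W_of_entry:
  assumes S: "sym_assoc_scheme n 3 A" and ab: "a < n" "b < n" and k: "k \<le> 3" and Ak: "A k $$ (a,b) = 1"
  shows "W_of n A w1 w2 w3 $$ (a,b) = ent w1 w2 w3 k"
proof -
  obtain k' where k': "k' \<le> 3" "A k' $$ (a,b) = 1" "\<forall>j\<le>3. j \<noteq> k' \<longrightarrow> A j $$ (a,b) = 0"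
    using scheme_rel[OF S ab] by blast
  have kk: "k' = k" using k' k Ak by force
  have c: "\<And>j. j \<le> 3 \<Longrightarrow> A j \<in> carrier_mat n n" using scheme_basic(1)[OF S] by blast
  have "W_of n A w1 w2 w3 $$ (a,b) = A 0 $$ (a,b) + w1 * A 1 $$ (a,b) + w2 * A 2 $$ (a,b) + w3 * A 3 $$ (a,b)"
    unfolding W_of_def using c[of 0] c[of 1] c[of 2] c[of 3] ab by simp
  also have "\<dots> = ent w1 w2 w3 k"
    using k' kk k unfolding ent_def
    by (cases "k = 0"; cases "k = 1"; cases "k = 2"; cases "k=3"; auto)
  finally show ?thesis .
qed

lemma W_of_carrier:
  assumes S: "sym_assoc_scheme n 3 A"
  shows "W_of n A w1 w2 w3 \<in> carrier_mat n n"
  using scheme_basic(1)[OF S] unfolding W_of_def by auto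

lemma W_of_entry_ex:
  assumes S: "sym_assoc_scheme n 3 A" and ab: "a < n" "b < n"
  shows "\<exists>k\<le>3. W_of n A w1 w2 w3 $$ (a,b) = ent w1 w2 w3 k"
  using scheme_rel[OF S ab] W_of_entry[OF S ab] by blast

lemma W_of_nz:
  assumes S: "sym_assoc_scheme n 3 A" and ab: "a < n" "b < n"
    and nz: "w1 \<noteq> 0" "w2 \<noteq> 0" "w3 \<noteq> 0"
  shows "W_of n A w1 w2 w3 $$ (a,b) \<noteq> 0"
  using W_of_entry_ex[OF S ab, of w1 w2 w3] nz unfolding ent_def by (auto split: if_splits)


lemma sum_delta_nat:
  fixes f :: "nat \<Rightarrow> complex"
  assumes "i < n"
  shows "(\<Sum>k\<in>{0..<n}. (if k = i then c else 0) * f k) = c * f i"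
proof -
  have "(\<Sum>k\<in>{0..<n}. (if k = i then c else 0) * f k) = (\<Sum>k\<in>{0..<n}. if k = i then c * f k else 0)"
    by (rule sum.cong) auto
  also have "\<dots> = c * f i" using assms by (simp add: sum.delta)
  finally show ?thesis .
qed

lemma diag_left:
  fixes D M :: "complex mat"
  assumes D: "D \<in> carrier_mat n n" "diagonal_mat D" and M: "M \<in> carrier_mat n n" and ij: "i < n" "j < n"
  shows "(D * M) $$ (i,j) = D $$ (i,i) * M $$ (i,j)"
proof -
  have "(D * M) $$ (i,j) = (\<Sum>k\<in>{0..<n}. D $$ (i,k) * M $$ (k,j))"
    using D M ij by (simp add: scalar_prod_def)
  also have "\<dots> = (\<Sum>k\<in>{0..<n}. (if k = i then D $$ (i,i) else 0) * M $$ (k,j))"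
    using D ij by (intro sum.cong) (auto simp: diagonal_mat_def)
  also have "\<dots> = D $$ (i,i) * M $$ (i,j)" using ij(1) by (rule sum_delta_nat)
  finally show ?thesis .
qed

lemma diag_right:
  fixes D M :: "complex mat"
  assumes D: "D \<in> carrier_mat n n" "diagonal_mat D" and M: "M \<in> carrier_mat n n" and ij: "i < n" "j < n"
  shows "(M * D) $$ (i,j) = M $$ (i,j) * D $$ (j,j)"
proof -
  have "(M * D) $$ (i,j) = (\<Sum>k\<in>{0..<n}. M $$ (i,k) * D $$ (k,j))"
    using D M ij by (simp add: scalar_prod_def)
  also have "\<dots> = (\<Sum>k\<in>{0..<n}. (if k = j then D $$ (j,j) else 0) * M $$ (i,k))"
    using D ij by (intro sum.cong) (auto simp: diagonal_mat_def mult.commute)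
  also have "\<dots> = D $$ (j,j) * M $$ (i,j)" using ij(2) by (rule sum_delta_nat)
  finally show ?thesis by (simp add: mult.commute)
qed

lemma perm_left:
  fixes M :: "complex mat"
  assumes s: "sg permutes {..<n}" and M: "M \<in> carrier_mat n n" and ij: "i < n" "j < n"
  shows "(mat n n (\<lambda>(i,j). if sg i = j then 1 else 0) * M) $$ (i,j) = M $$ (sg i, j)"
proof -
  have si: "sg i < n" using permutes_in_image[OF s, of i] ij by simp
  have "(mat n n (\<lambda>(i,j). if sg i = j then 1 else 0) * M) $$ (i,j)
      = (\<Sum>k\<in>{0..<n}. (if k = sg i then 1 else 0) * M $$ (k,j))"
    using M ij by (auto simp: scalar_prod_def intro!: sum.cong)
  also have "\<dots> = M $$ (sg i, j)" using sum_delta_nat[OF si, of 1 "\<lambda>k. M $$ (k,j)"] by simp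
  finally show ?thesis .
qed

lemma perm_right:
  fixes M :: "complex mat"
  assumes s: "sg permutes {..<n}" and M: "M \<in> carrier_mat n n" and ij: "i < n" "j < n"
  shows "(M * mat n n (\<lambda>(i,j). if sg i = j then 1 else 0)) $$ (i,j) = M $$ (i, inv_into UNIV sg j)"
proof -
  have si: "inv_into UNIV sg j < n" using permutes_in_image[OF permutes_inv[OF s], of j] ij by simp
  have "(M * mat n n (\<lambda>(i,j). if sg i = j then 1 else 0)) $$ (i,j)
      = (\<Sum>k\<in>{0..<n}. (if k = inv_into UNIV sg j then 1 else 0) * M $$ (i,k))"
    using M ij by (auto simp: scalar_prod_def permutes_inv_eq[OF s] permutes_inverses[OF s] intro!: sum.cong)
  also have "\<dots> = M $$ (i, inv_into UNIV sg j)" using sum_delta_nat[OF si, of 1] by (simp add: permutes_inverses[OF s])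
  finally show ?thesis .
qed

definition CR :: "complex mat \<Rightarrow> nat \<Rightarrow> nat \<Rightarrow> nat \<Rightarrow> nat \<Rightarrow> complex" where
  "CR W a b x y = W $$ (a,x) * W $$ (b,y) / (W $$ (a,y) * W $$ (b,x))"

definition CRS :: "nat \<Rightarrow> complex mat \<Rightarrow> complex set" where
  "CRS n W = {CR W a b x y | a b x y. a < n \<and> b < n \<and> x < n \<and> y < n}"

lemma equiv_entries:
  assumes W1: "W1 \<in> carrier_mat n n" and W2: "W2 \<in> carrier_mat n n"
    and eq: "typeII_equiv n W1 W2"
  shows "\<exists>d d' sg io. sg permutes {..<n} \<and> io permutes {..<n} \<and>
     (\<forall>a<n. \<forall>x<n. d a * W1 $$ (a,x) * d' x = W2 $$ (sg a, io x))"
proof -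
  obtain D D' T T' where h: "invertible_diag n D" "invertible_diag n D'" "perm_matrix n T" "perm_matrix n T'"
    "D * W1 * D' = T * W2 * T'" using eq unfolding typeII_equiv_def by blast
  obtain sg where s: "sg permutes {..<n}" "T = mat n n (\<lambda>(i,j). if sg i = j then 1 else 0)"
    using h(3) unfolding perm_matrix_def by blast
  obtain ta where t: "ta permutes {..<n}" "T' = mat n n (\<lambda>(i,j). if ta i = j then 1 else 0)"
    using h(4) unfolding perm_matrix_def by blast
  have D: "D \<in> carrier_mat n n" "diagonal_mat D" and D': "D' \<in> carrier_mat n n" "diagonal_mat D'"
    using h(1,2) unfolding invertible_diag_def by auto
  have TW: "T * W2 \<in> carrier_mat n n" using s(2) W2 by (auto intro!: mult_carrier_mat)
  have DW: "D * W1 \<in> carrier_mat n n" using D W1 by simp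
  show ?thesis
  proof (intro exI conjI allI impI)
    show "sg permutes {..<n}" by (rule s(1))
    show "inv_into UNIV ta permutes {..<n}" by (rule permutes_inv[OF t(1)])
    fix a x assume ax: "a < n" "x < n"
    have "D $$ (a,a) * W1 $$ (a,x) * D' $$ (x,x) = (D * W1 * D') $$ (a,x)"
      using diag_right[OF D' DW ax] diag_left[OF D W1 ax] by simp
    also have "\<dots> = (T * W2 * T') $$ (a,x)" using h(5) by simp
    also have "\<dots> = (T * W2) $$ (a, inv_into UNIV ta x)" using perm_right[OF t(1) TW ax] t(2) by simp
    also have "\<dots> = W2 $$ (sg a, inv_into UNIV ta x)"
      using perm_left[OF s(1) W2 ax(1)] s(2) permutes_in_image[OF permutes_inv[OF t(1)], of x] ax by simp
    finally show "D $$ (a,a) * W1 $$ (a,x) * D' $$ (x,x) = W2 $$ (sg a, inv_into UNIV ta x)" .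
  qed
qed

lemma equiv_CRS:
  assumes W1: "W1 \<in> carrier_mat n n" and W2: "W2 \<in> carrier_mat n n"
    and nz: "\<forall>a<n. \<forall>b<n. W2 $$ (a,b) \<noteq> 0"
    and eq: "typeII_equiv n W1 W2"
  shows "CRS n W1 = CRS n W2"
proof -
  obtain d d' sg io where s: "sg permutes {..<n}" and i: "io permutes {..<n}"
    and e: "\<And>a x. a < n \<Longrightarrow> x < n \<Longrightarrow> d a * W1 $$ (a,x) * d' x = W2 $$ (sg a, io x)"
    using equiv_entries[OF W1 W2 eq] by blast
  have sn: "\<And>a. a < n \<Longrightarrow> sg a < n" using permutes_in_image[OF s] by simp
  have in_: "\<And>a. a < n \<Longrightarrow> io a < n" using permutes_in_image[OF i] by simp
  have nz1: "\<And>a x. a < n \<Longrightarrow> x < n \<Longrightarrow> d a \<noteq> 0 \<and> d' x \<noteq> 0 \<and> W1 $$ (a,x) \<noteq> 0"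
  proof -
    fix a x assume "a < n" "x < n"
    then have "d a * W1 $$ (a,x) * d' x \<noteq> 0" using e nz sn in_ by simp
    then show "d a \<noteq> 0 \<and> d' x \<noteq> 0 \<and> W1 $$ (a,x) \<noteq> 0" by auto
  qed
  have key: "\<And>a b x y. a < n \<Longrightarrow> b < n \<Longrightarrow> x < n \<Longrightarrow> y < n \<Longrightarrow>
      CR W1 a b x y = CR W2 (sg a) (sg b) (io x) (io y)"
  proof -
    fix a b x y assume h: "a < n" "b < n" "x < n" "y < n"
    have "CR W2 (sg a) (sg b) (io x) (io y)
       = (d a * W1 $$ (a,x) * d' x) * (d b * W1 $$ (b,y) * d' y) / ((d a * W1 $$ (a,y) * d' y) * (d b * W1 $$ (b,x) * d' x))"
      unfolding CR_def using e h by simp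
    also have "\<dots> = CR W1 a b x y" unfolding CR_def using nz1 h by (simp add: field_simps)
    finally show "CR W1 a b x y = CR W2 (sg a) (sg b) (io x) (io y)" by simp
  qed
  show ?thesis
  proof
    show "CRS n W1 \<subseteq> CRS n W2"
    proof
      fix z assume "z \<in> CRS n W1"
      then obtain a b x y where h: "a < n" "b < n" "x < n" "y < n" "z = CR W1 a b x y"
        unfolding CRS_def by blast
      have "z = CR W2 (sg a) (sg b) (io x) (io y)" using key[OF h(1-4)] h(5) by simp
      then show "z \<in> CRS n W2" unfolding CRS_def using sn in_ h by blast
    qed
    show "CRS n W2 \<subseteq> CRS n W1"
    proof
      fix z assume "z \<in> CRS n W2"
      then obtain a b x y where h: "a < n" "b < n" "x < n" "y < n" "z = CR W2 a b x y"
        unfolding CRS_def by blast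
      have ia: "\<And>a. a < n \<Longrightarrow> inv_into UNIV sg a < n" using permutes_in_image[OF permutes_inv[OF s]] by simp
      have ib: "\<And>a. a < n \<Longrightarrow> inv_into UNIV io a < n" using permutes_in_image[OF permutes_inv[OF i]] by simp
      have "z = CR W1 (inv_into UNIV sg a) (inv_into UNIV sg b) (inv_into UNIV io x) (inv_into UNIV io y)"
        using key[OF ia[OF h(1)] ia[OF h(2)] ib[OF h(3)] ib[OF h(4)]] h
        by (simp add: permutes_inverses[OF s] permutes_inverses[OF i])
      then show "z \<in> CRS n W1" unfolding CRS_def using ia ib h by blast
    qed
  qed
qed


lemma msum_smult_mult_entry:
  fixes M :: "nat \<Rightarrow> complex mat"
  assumes M: "\<And>i. i \<in> I \<Longrightarrow> M i \<in> carrier_mat n n" and X: "X \<in> carrier_mat n n"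
    and I: "finite I" and ab: "a < n" "b < n"
  shows "(msum n (\<lambda>i. f i \<cdot>\<^sub>m M i) I * X) $$ (a,b) = (\<Sum>i\<in>I. f i * (M i * X) $$ (a,b))"
proof -
  have "(msum n (\<lambda>i. f i \<cdot>\<^sub>m M i) I * X) $$ (a,b)
      = (\<Sum>k\<in>{0..<n}. (\<Sum>i\<in>I. f i * M i $$ (a,k)) * X $$ (k,b))"
  proof -
    have h: "(f i \<cdot>\<^sub>m M i) $$ (a,k) = f i * M i $$ (a,k)" if "i \<in> I" "k < n" for i k
    proof -
      have "M i \<in> carrier_mat n n" using M that(1) by blast
      then show ?thesis using ab that(2) by simp
    qed
    show ?thesis using X ab by (auto simp: msum_def scalar_prod_def h intro!: sum.cong)
  qed
  also have "\<dots> = (\<Sum>k\<in>{0..<n}. \<Sum>i\<in>I. f i * (M i $$ (a,k) * X $$ (k,b)))"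
    by (simp add: sum_distrib_right mult.assoc)
  also have "\<dots> = (\<Sum>i\<in>I. \<Sum>k\<in>{0..<n}. f i * (M i $$ (a,k) * X $$ (k,b)))"
    by (rule sum.swap)
  also have "\<dots> = (\<Sum>i\<in>I. f i * (M i * X) $$ (a,b))"
  proof (intro sum.cong refl)
    fix i assume "i \<in> I"
    then have "M i \<in> carrier_mat n n" using M by blast
    then show "(\<Sum>k\<in>{0..<n}. f i * (M i $$ (a,k) * X $$ (k,b))) = f i * (M i * X) $$ (a,b)"
      using X ab by (simp add: scalar_prod_def sum_distrib_left)
  qed
  finally show ?thesis .
qed

lemma eigen_facts:
  assumes F: "first_eigenmatrix n 3 A P"
  obtains E where "\<And>i. i \<le> 3 \<Longrightarrow> E i \<in> carrier_mat n n" "\<And>i. i \<le> 3 \<Longrightarrow> E i \<noteq> 0\<^sub>m n n"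
    "\<And>i j. i \<le> 3 \<Longrightarrow> j \<le> 3 \<Longrightarrow> E i * E j = (if i = j then E i else 0\<^sub>m n n)"
    "\<And>j. j \<le> 3 \<Longrightarrow> A j = msum n (\<lambda>i. P i j \<cdot>\<^sub>m E i) {..3}"
  using F unfolding first_eigenmatrix_def by blast

lemma AE_entry:
  assumes F: "first_eigenmatrix n 3 A P" and E: "\<And>i. i \<le> 3 \<Longrightarrow> E i \<in> carrier_mat n n"
    "\<And>i j. i \<le> 3 \<Longrightarrow> j \<le> 3 \<Longrightarrow> E i * E j = (if i = j then E i else 0\<^sub>m n n)"
    "\<And>j. j \<le> 3 \<Longrightarrow> A j = msum n (\<lambda>i. P i j \<cdot>\<^sub>m E i) {..3}"
    and k: "k \<le> 3" and l: "l \<le> 3" and ab: "a < n" "b < n"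
  shows "(A k * E l) $$ (a,b) = P l k * E l $$ (a,b)"
proof -
  have "(A k * E l) $$ (a,b) = (\<Sum>i\<in>{..3}. P i k * (E i * E l) $$ (a,b))"
    unfolding E(3)[OF k] by (rule msum_smult_mult_entry) (use E(1) l ab in auto)
  also have "\<dots> = (\<Sum>i\<in>{..3}. if i = l then P l k * E l $$ (a,b) else 0)"
    using E(2) l ab by (intro sum.cong refl) auto
  also have "\<dots> = P l k * E l $$ (a,b)" using l by (simp add: sum.delta)
  finally show ?thesis .
qed

lemma sum4: "(\<Sum>i\<in>{..3::nat}. f i) = f 0 + f 1 + f 2 + f 3"
proof -
  have "{..3::nat} = {0,1,2,3}" by auto
  then show ?thesis by (simp add: add.assoc)
qed

lemma triangle_rel1:
  assumes S: "sym_assoc_scheme n 3 A" and F: "first_eigenmatrix n 3 A (P_q q)" and q: "q \<ge> 4"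
    and ab: "a < n" "b < n" and A1: "A 1 $$ (a,b) = 1"
  shows "\<exists>y<n. A 1 $$ (a,y) = 1 \<and> A 1 $$ (y,b) = 1"
proof -
  obtain E where E: "\<And>i. i \<le> 3 \<Longrightarrow> E i \<in> carrier_mat n n" "\<And>i. i \<le> 3 \<Longrightarrow> E i \<noteq> 0\<^sub>m n n"
    "\<And>i j. i \<le> 3 \<Longrightarrow> j \<le> 3 \<Longrightarrow> E i * E j = (if i = j then E i else 0\<^sub>m n n)"
    "\<And>j. j \<le> 3 \<Longrightarrow> A j = msum n (\<lambda>i. P_q q i j \<cdot>\<^sub>m E i) {..3}"
    using eigen_facts[OF F] by blast
  have Ac: "\<And>k. k \<le> 3 \<Longrightarrow> A k \<in> carrier_mat n n" using S unfolding sym_assoc_scheme_def by auto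
  obtain c where c: "A 1 * A 1 = msum n (\<lambda>k. c k \<cdot>\<^sub>m A k) {..3}"
    using S unfolding sym_assoc_scheme_def in_span_def by force
  define P where "P = P_q q"
  have eq: "P l 1 ^ 2 = (\<Sum>k\<in>{..3}. c k * P l k)" if l: "l \<le> 3" for l
  proof -
    obtain u v where uv: "u < n" "v < n" "E l $$ (u,v) \<noteq> 0"
    proof (rule ccontr)
      assume "\<not> thesis"
      then have "\<And>u v. u < n \<Longrightarrow> v < n \<Longrightarrow> E l $$ (u,v) = 0" using that by blast
      then have "E l = 0\<^sub>m n n" using E(1)[OF l] by (intro eq_matI) auto
      with E(2)[OF l] show False by simp
    qed
    have "(A 1 * A 1 * E l) $$ (u,v) = (A 1 * (A 1 * E l)) $$ (u,v)"
      using Ac[of 1] E(1)[OF l] by (simp add: assoc_mult_mat[of _ n n _ n _ n])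
    also have "A 1 * E l = P l 1 \<cdot>\<^sub>m E l"
    proof (rule eq_matI)
      fix i j assume ij: "i < dim_row (P l 1 \<cdot>\<^sub>m E l)" "j < dim_col (P l 1 \<cdot>\<^sub>m E l)"
      then have ij': "i < n" "j < n" using E(1)[OF l] by auto
      have h1: "(A 1 * E l) $$ (i,j) = P l 1 * E l $$ (i,j)"
        using AE_entry[OF F E(1,3,4) _ l ij', of 1] unfolding P_def by simp
      have h2: "(P l 1 \<cdot>\<^sub>m E l) $$ (i,j) = P l 1 * E l $$ (i,j)" using ij' E(1)[OF l] by simp
      show "(A 1 * E l) $$ (i,j) = (P l 1 \<cdot>\<^sub>m E l) $$ (i,j)" using h1 h2 by simp
    qed (use E(1)[OF l] Ac[of 1] in auto)
    also have "(A 1 * (P l 1 \<cdot>\<^sub>m E l)) $$ (u,v) = P l 1 * (A 1 * E l) $$ (u,v)"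
      using Ac[of 1] E(1)[OF l] uv by (simp add: mult_smult_distrib[of _ n n _ n])
    also have "\<dots> = P l 1 ^ 2 * E l $$ (u,v)"
      using AE_entry[OF F E(1,3,4) _ l uv(1,2), of 1] unfolding P_def by (simp add: power2_eq_square)
    finally have L: "(A 1 * A 1 * E l) $$ (u,v) = P l 1 ^ 2 * E l $$ (u,v)" .
    have "(A 1 * A 1 * E l) $$ (u,v) = (\<Sum>k\<in>{..3}. c k * (A k * E l) $$ (u,v))"
      unfolding c by (rule msum_smult_mult_entry) (use Ac E(1)[OF l] uv in auto)
    also have "\<dots> = (\<Sum>k\<in>{..3}. c k * P l k) * E l $$ (u,v)"
      using AE_entry[OF F E(1,3,4) _ l uv(1,2)] unfolding P_def
      by (simp add: sum_distrib_right mult.assoc)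
    finally have R: "(A 1 * A 1 * E l) $$ (u,v) = (\<Sum>k\<in>{..3}. c k * P l k) * E l $$ (u,v)" .
    from L R uv(3) show ?thesis by simp
  qed
  define y where "y = (of_nat q :: complex) / 2"
  have P0: "P 0 0 = 1" "P 0 1 = 2*y^2 - 2*y" "P 0 2 = 2*y^2" "P 0 3 = 2*y - 2"
    and P1: "P 1 0 = 1" "P 1 1 = y" "P 1 2 = -y" "P 1 3 = -1"
    and P2: "P 2 0 = 1" "P 2 1 = -y + 1" "P 2 2 = -y" "P 2 3 = 2*y - 2"
    and P3: "P 3 0 = 1" "P 3 1 = -y" "P 3 2 = y" "P 3 3 = -1"
    unfolding P_def P_q_def y_def Let_def by (simp_all add: numeral_eq_Suc field_simps power2_eq_square)
  have e0: "(2*y^2 - 2*y)^2 = c 0 + c 1 * (2*y^2 - 2*y) + c 2 * (2*y^2) + c 3 * (2*y - 2)"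
    using eq[of 0] unfolding sum4 P0 by simp
  have e1: "y^2 = c 0 + c 1 * y + c 2 * (-y) + c 3 * (-1)"
    using eq[of 1] unfolding sum4 P1 by simp
  have e2: "(-y+1)^2 = c 0 + c 1 * (-y+1) + c 2 * (-y) + c 3 * (2*y - 2)"
    using eq[of 2] unfolding sum4 P2 by simp
  have e3: "(-y)^2 = c 0 + c 1 * (-y) + c 2 * y + c 3 * (-1)"
    using eq[of 3] unfolding sum4 P3 by simp
  have ynz: "y \<noteq> 0" using q unfolding y_def by simp
  have "y^2 - (-y)^2 = (c 0 + c 1 * y + c 2 * (-y) + c 3 * (-1)) - (c 0 + c 1 * (-y) + c 2 * y + c 3 * (-1))"
    using e1 e3 by simp
  then have "y = 0 \<or> c 2 = c 1" by (simp add: algebra_simps)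
  then have c12: "c 2 = c 1" using ynz by simp
  have D: "(2*y^2 - 2*y)^2 - (-y+1)^2 = (c 0 + c 1 * (2*y^2 - 2*y) + c 1 * (2*y^2) + c 3 * (2*y - 2))
     - (c 0 + c 1 * (-y+1) + c 1 * (-y) + c 3 * (2*y - 2))"
    using e0 e2 c12 by simp
  have X: "(2*y^2 - 2*y)^2 - (-y+1)^2 = (y - 1)^2 * (4*y^2 - 1)" by (simp add: power2_eq_square algebra_simps)
  have Y: "(c 0 + c 1 * (2*y^2 - 2*y) + c 1 * (2*y^2) + c 3 * (2*y - 2))
     - (c 0 + c 1 * (-y+1) + c 1 * (-y) + c 3 * (2*y - 2)) = c 1 * (4*y^2 - 1)" by (simp add: power2_eq_square algebra_simps)
  have "c 1 * (4*y^2 - 1) = (y - 1)^2 * (4*y^2 - 1)" using D X Y by metis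
  moreover have "4*y^2 - 1 \<noteq> 0"
  proof
    assume "4*y^2 - 1 = 0"
    then have "(of_nat (q^2) :: complex) = of_nat 1" unfolding y_def by (simp add: power2_eq_square field_simps)
    then have "q^2 = 1" by (simp only: of_nat_eq_iff)
    with q show False by simp
  qed
  ultimately have c1: "c 1 = (y - 1)^2" by simp
  have "y - 1 \<noteq> 0"
  proof
    assume "y - 1 = 0" then have "(of_nat q :: complex) = of_nat 2" unfolding y_def by simp
    then have "q = 2" by (simp only: of_nat_eq_iff)
    with q show False by simp
  qed
  then have c1nz: "c 1 \<noteq> 0" using c1 by simp
  obtain k where k: "k \<le> 3" "A k $$ (a,b) = 1" "\<forall>j\<le>3. j \<noteq> k \<longrightarrow> A j $$ (a,b) = 0"
    using scheme_rel[OF S ab] by blast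
  have k1: "k = 1"
  proof (rule ccontr)
    assume "k \<noteq> 1" then have "A 1 $$ (a,b) = 0" using k(3) by simp
    with A1 show False by simp
  qed
  have "(A 1 * A 1) $$ (a,b) = (\<Sum>j\<in>{..3}. c j * A j $$ (a,b))"
  proof -
    have h: "(c j \<cdot>\<^sub>m A j) $$ (a,b) = c j * A j $$ (a,b)" if "j \<in> {..3}" for j
      using Ac[of j] that ab by simp
    have "(A 1 * A 1) $$ (a,b) = (\<Sum>j\<in>{..3}. (c j \<cdot>\<^sub>m A j) $$ (a,b))"
      unfolding c using ab by (simp add: msum_def)
    also have "\<dots> = (\<Sum>j\<in>{..3}. c j * A j $$ (a,b))" by (rule sum.cong) (auto simp: h)
    finally show ?thesis .
  qed
  also have "\<dots> = c 1" unfolding sum4 using k k1 A1 by simp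
  finally have ne: "(A 1 * A 1) $$ (a,b) \<noteq> 0" using c1nz by simp
  have "(A 1 * A 1) $$ (a,b) = (\<Sum>t\<in>{0..<n}. A 1 $$ (a,t) * A 1 $$ (t,b))"
    using Ac[of 1] ab by (simp add: scalar_prod_def)
  then have sumeq: "(A 1 * A 1) $$ (a,b) = (\<Sum>t\<in>{0..<n}. A 1 $$ (a,t) * A 1 $$ (t,b))" .
  have "(\<Sum>t\<in>{0..<n}. A 1 $$ (a,t) * A 1 $$ (t,b)) \<noteq> 0" using ne unfolding sumeq .
  then obtain t where t: "t \<in> {0..<n}" "A 1 $$ (a,t) * A 1 $$ (t,b) \<noteq> 0"
    by (rule sum.not_neutral_contains_not_neutral)
  have v: "\<And>u v. u < n \<Longrightarrow> v < n \<Longrightarrow> A 1 $$ (u,v) \<in> {0,1}"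
    using scheme_basic(4)[OF S, of 1] by simp
  have tn: "t < n" using t(1) by simp
  have at0: "A 1 $$ (a,t) \<in> {0,1}" using v ab tn by blast
  have tb0: "A 1 $$ (t,b) \<in> {0,1}" using v ab tn by blast
  have "A 1 $$ (a,t) \<noteq> 0" "A 1 $$ (t,b) \<noteq> 0" using t(2) by auto
  then have at: "A 1 $$ (a,t) = 1" and tb: "A 1 $$ (t,b) = 1" using at0 tb0 by auto
  show ?thesis using at tb tn by blast
qed


lemma W_ent:
  assumes S: "sym_assoc_scheme n 3 A" and ab: "a < n" "b < n" and k: "k \<le> 3" and Ak: "A k $$ (a,b) = 1"
  shows "W_of n A w1 w2 w3 $$ (a,b) = ent w1 w2 w3 k" "W_of n A w1 w2 w3 $$ (b,a) = ent w1 w2 w3 k"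
proof -
  show "W_of n A w1 w2 w3 $$ (a,b) = ent w1 w2 w3 k" by (rule W_of_entry[OF S ab k Ak])
  have "A k $$ (b,a) = 1" using scheme_sym[OF S k ab] Ak by simp
  then show "W_of n A w1 w2 w3 $$ (b,a) = ent w1 w2 w3 k" by (rule W_of_entry[OF S ab(2,1) k])
qed

lemma W_diag:
  assumes S: "sym_assoc_scheme n 3 A" and a: "a < n"
  shows "W_of n A w1 w2 w3 $$ (a,a) = 1"
proof -
  have "A 0 $$ (a,a) = 1" by (rule scheme_diag(1)[OF S a])
  then have "W_of n A w1 w2 w3 $$ (a,a) = ent w1 w2 w3 0" using W_of_entry[OF S a a, of 0] by simp
  then show ?thesis by (simp add: ent_def)
qed

lemma CRS_sq:
  assumes S: "sym_assoc_scheme n 3 A" and k: "k \<le> 3"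
  shows "(ent w1 w2 w3 k)^2 \<in> CRS n (W_of n A w1 w2 w3)"
proof -
  obtain a b where ab: "a < n" "b < n" "A k $$ (a,b) = 1" using scheme_nonempty[OF S k] by blast
  have "CR (W_of n A w1 w2 w3) a b b a = (ent w1 w2 w3 k)^2"
    unfolding CR_def using W_ent[OF S ab(1,2) k ab(3)] W_diag[OF S ab(1)] W_diag[OF S ab(2)]
    by (simp add: power2_eq_square)
  then show ?thesis unfolding CRS_def using ab by (metis (mono_tags, lifting) mem_Collect_eq)
qed

lemma CRS_sub:
  assumes S: "sym_assoc_scheme n 3 A" and z: "z \<in> CRS n (W_of n A w1 w2 w3)"
  shows "\<exists>i j k l. i \<le> 3 \<and> j \<le> 3 \<and> k \<le> 3 \<and> l \<le> 3 \<and>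
      z = ent w1 w2 w3 i * ent w1 w2 w3 j / (ent w1 w2 w3 k * ent w1 w2 w3 l)"
proof -
  obtain a b x y where h: "a < n" "b < n" "x < n" "y < n" "z = CR (W_of n A w1 w2 w3) a b x y"
    using z unfolding CRS_def by blast
  obtain i where i: "i \<le> 3" "W_of n A w1 w2 w3 $$ (a,x) = ent w1 w2 w3 i" using W_of_entry_ex[OF S h(1,3)] by blast
  obtain j where j: "j \<le> 3" "W_of n A w1 w2 w3 $$ (b,y) = ent w1 w2 w3 j" using W_of_entry_ex[OF S h(2,4)] by blast
  obtain k where k: "k \<le> 3" "W_of n A w1 w2 w3 $$ (a,y) = ent w1 w2 w3 k" using W_of_entry_ex[OF S h(1,4)] by blast
  obtain l where l: "l \<le> 3" "W_of n A w1 w2 w3 $$ (b,x) = ent w1 w2 w3 l" using W_of_entry_ex[OF S h(2,3)] by blast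
  show ?thesis using i j k l h(5) unfolding CR_def by metis
qed

lemma CRS_tri:
  assumes S: "sym_assoc_scheme n 3 A" and F: "first_eigenmatrix n 3 A (P_q q)" and q: "q \<ge> 4"
    and w1: "w1 \<noteq> 0"
  shows "1 / w1 \<in> CRS n (W_of n A w1 w2 w3)"
proof -
  obtain a b where ab: "a < n" "b < n" "A 1 $$ (a,b) = 1" using scheme_nonempty[OF S, of 1] by auto
  obtain t where t: "t < n" "A 1 $$ (a,t) = 1" "A 1 $$ (t,b) = 1"
    using triangle_rel1[OF S F q ab] by blast
  have e1: "ent w1 w2 w3 1 = w1" by (simp add: ent_def)
  have "CR (W_of n A w1 w2 w3) a t a b = 1 / w1"
    unfolding CR_def using W_ent[OF S ab(1,2) _ ab(3)] W_ent[OF S ab(1) t(1) _ t(2)] W_ent[OF S t(1) ab(2) _ t(3)]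
      W_diag[OF S ab(1)] e1 w1
    by (simp add: field_simps)
  then show ?thesis unfolding CRS_def using ab t by (metis (mono_tags, lifting) mem_Collect_eq)
qed


lemma hpos: "0 < a \<Longrightarrow> 0 \<le> k \<Longrightarrow> 0 \<le> b \<Longrightarrow> (0::real) < a + k * b"
  by (simp add: add_pos_nonneg)
lemma hnn: "0 \<le> a \<Longrightarrow> 0 \<le> k \<Longrightarrow> 0 \<le> b \<Longrightarrow> (0::real) \<le> a + k * b"
  by simp

lemma P1:
  fixes x :: real assumes "x \<ge> 4"
  shows "(x+2)^2*(17*x^2-18*x+1) < (5*x^2+x+2)^2"
proof -
  define k where "k = x - 4"
  have k0: "k \<ge> 0" and xk: "x = 4 + k" using assms unfolding k_def by auto
  have "(5*x^2+x+2)^2 - ((x+2)^2*(17*x^2-18*x+1)) = 160 + k * (392 + k * (312 + k * (88 + k * (8))))"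
    unfolding xk by (simp add: power2_eq_square power3_eq_cube algebra_simps)
  moreover have "0 < 160 + k * (392 + k * (312 + k * (88 + k * (8))))"
    using k0 by (intro hpos hnn) simp_all
  ultimately show ?thesis by simp
qed

lemma P2:
  fixes x :: real assumes "x \<ge> 6"
  shows "(4*x^2+4*x+6)^2 < (x+2)^2*(17*x^2-18*x+1)"
proof -
  define k where "k = x - 6"
  have k0: "k \<ge> 0" and xk: "x = 6 + k" using assms unfolding k_def by auto
  have "(x+2)^2*(17*x^2-18*x+1) - ((4*x^2+4*x+6)^2) = 2044 + k * (1888 + k * (473 + k * (42 + k * (1))))"
    unfolding xk by (simp add: power2_eq_square power3_eq_cube algebra_simps)
  moreover have "0 < 2044 + k * (1888 + k * (473 + k * (42 + k * (1))))"
    using k0 by (intro hpos hnn) simp_all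
  ultimately show ?thesis by simp
qed

lemma P3:
  fixes x :: real assumes "x \<ge> 8"
  shows "25*(x+2)^2*(17*x^2-18*x+1) < (24*x^2+4*x+10)^2"
proof -
  define k where "k = x - 8"
  have k0: "k \<ge> 0" and xk: "x = 8 + k" using assms unfolding k_def by auto
  have "(24*x^2+4*x+10)^2 - (25*(x+2)^2*(17*x^2-18*x+1)) = 127584 + k * (117028 + k * (33163 + k * (3774 + k * (151))))"
    unfolding xk by (simp add: power2_eq_square power3_eq_cube algebra_simps)
  moreover have "0 < 127584 + k * (117028 + k * (33163 + k * (3774 + k * (151))))"
    using k0 by (intro hpos hnn) simp_all
  ultimately show ?thesis by simp
qed

lemma P4:
  fixes x :: real assumes "x \<ge> 4"
  shows "(3*x^2+7*x-2)^2 < (x+2)^2*(17*x^2-18*x+1)"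
proof -
  define k where "k = x - 4"
  have k0: "k \<ge> 0" and xk: "x = 4 + k" using assms unfolding k_def by auto
  have "(x+2)^2*(17*x^2-18*x+1) - ((3*x^2+7*x-2)^2) = 1760 + k * (2072 + k * (824 + k * (136 + k * (8))))"
    unfolding xk by (simp add: power2_eq_square power3_eq_cube algebra_simps)
  moreover have "0 < 1760 + k * (2072 + k * (824 + k * (136 + k * (8))))"
    using k0 by (intro hpos hnn) simp_all
  ultimately show ?thesis by simp
qed

lemma P5:
  fixes x :: real assumes "x \<ge> 4"
  shows "625*(x+2)^2*(17*x^2-18*x+1) < (107*x^2+207*x-50)^2"
proof -
  define k where "k = x - 4"
  have k0: "k \<ge> 0" and xk: "x = 4 + k" using assms unfolding k_def by auto
  have "(107*x^2+207*x-50)^2 - (625*(x+2)^2*(17*x^2-18*x+1)) = 1677600 + k * (1131240 + k * (269704 + k * (26232 + k * (824))))"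
    unfolding xk by (simp add: power2_eq_square power3_eq_cube algebra_simps)
  moreover have "0 < 1677600 + k * (1131240 + k * (269704 + k * (26232 + k * (824))))"
    using k0 by (intro hpos hnn) simp_all
  ultimately show ?thesis by simp
qed


definition ar :: "real \<Rightarrow> real \<Rightarrow> real" where
  "ar x r = (-(x-1)*(x-2) + (x+2)*r) / (2*x*(x+1))"

lemma sq_lt_imp: fixes A B :: real assumes "A^2 < B^2" "0 \<le> B" shows "A < B"
  using assms by (rule power_less_imp_less_base)

lemma ar_lt_iff: fixes x r c :: real assumes "x \<ge> 4"
  shows "ar x r < c \<longleftrightarrow> -(x-1)*(x-2) + (x+2)*r < c * (2*x*(x+1))"
  using assms unfolding ar_def by (simp add: pos_divide_less_eq)

lemma ar_gt_iff: fixes x r c :: real assumes "x \<ge> 4"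
  shows "c < ar x r \<longleftrightarrow> c * (2*x*(x+1)) < -(x-1)*(x-2) + (x+2)*r"
  using assms unfolding ar_def by (simp add: pos_less_divide_eq)

lemma rsq: fixes x r :: real assumes "r^2 = (17*x-1)*(x-1)" shows "((x+2)*r)^2 = (x+2)^2*(17*x^2-18*x+1)"
proof -
  have "((x+2)*r)^2 = (x+2)^2 * r^2" by (simp add: power_mult_distrib)
  also have "\<dots> = (x+2)^2*((17*x-1)*(x-1))" using assms by simp
  also have "\<dots> = (x+2)^2*(17*x^2-18*x+1)" by (simp add: algebra_simps power2_eq_square)
  finally show ?thesis .
qed

lemma ar_pos_lt2: fixes x r :: real assumes x: "x \<ge> 4" and r: "r > 0" "r^2 = (17*x-1)*(x-1)"
  shows "ar x r < 2"
proof -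
  have h1: "((x+2)*r)^2 < (5*x^2+x+2)^2" using P1[OF x] unfolding rsq[OF r(2)] .
  have h2: "0 \<le> 5*x^2+x+2" using x by simp
  have h3: "(x+2)*r < 5*x^2+x+2" by (rule sq_lt_imp[OF h1 h2])
  have e: "-(x-1)*(x-2) + (5*x^2+x+2) = 2*(2*x*(x+1))" by (simp add: algebra_simps power2_eq_square)
  show ?thesis unfolding ar_lt_iff[OF x] using h3 e by linarith
qed

lemma ar_pos_gt: fixes x r :: real assumes x: "x \<ge> 6" and r: "r > 0" "r^2 = (17*x-1)*(x-1)"
  shows "(3*x+4)/(2*x) < ar x r"
proof -
  have x4: "x \<ge> 4" using x by simp
  have h1: "(4*x^2+4*x+6)^2 < ((x+2)*r)^2" using P2[OF x] unfolding rsq[OF r(2)] .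
  have h2: "0 \<le> (x+2)*r" using x r(1) by simp
  have h3: "4*x^2+4*x+6 < (x+2)*r" by (rule sq_lt_imp[OF h1 h2])
  have e: "(3*x+4)/(2*x) * (2*x*(x+1)) = (3*x+4)*(x+1)" using x by simp
  have e2: "(3*x+4)*(x+1) + (x-1)*(x-2) = 4*x^2+4*x+6" by (simp add: algebra_simps power2_eq_square)
  show ?thesis unfolding ar_gt_iff[OF x4] e using h3 e2 by linarith
qed

lemma ar_pos_lt19: fixes x r :: real assumes x: "x \<ge> 8" and r: "r > 0" "r^2 = (17*x-1)*(x-1)"
  shows "ar x r < 19/10"
proof -
  have x4: "x \<ge> 4" using x by simp
  have h1: "(5*((x+2)*r))^2 < (24*x^2+4*x+10)^2" using P3[OF x] unfolding power_mult_distrib[of 5] rsq[OF r(2)] by simp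
  have h2: "0 \<le> 24*x^2+4*x+10" using x by simp
  have h3: "5*((x+2)*r) < 24*x^2+4*x+10" by (rule sq_lt_imp[OF h1 h2])
  have e: "-(x-1)*(x-2)*5 + (24*x^2+4*x+10) = 19/10*(2*x*(x+1))*5" by (simp add: algebra_simps power2_eq_square)
  show ?thesis unfolding ar_lt_iff[OF x4] using h3 e by linarith
qed

lemma ar_neg_lt: fixes x r :: real assumes x: "x \<ge> 4" and r: "r < 0" "r^2 = (17*x-1)*(x-1)"
  shows "ar x r < -2"
proof -
  have h1: "(3*x^2+7*x-2)^2 < ((x+2)*(-r))^2" using P4[OF x] rsq[OF r(2)] by simp
  have h2: "0 \<le> (x+2)*(-r)" using x r(1) by (intro mult_nonneg_nonneg) auto
  have h3: "3*x^2+7*x-2 < (x+2)*(-r)" by (rule sq_lt_imp[OF h1 h2])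
  have e: "-(x-1)*(x-2) - (3*x^2+7*x-2) = -2*(2*x*(x+1))" by (simp add: algebra_simps power2_eq_square)
  have m: "(x+2)*(-r) = -((x+2)*r)" by simp
  show ?thesis unfolding ar_lt_iff[OF x] using h3 e m by linarith
qed

lemma ar_neg_gt: fixes x r :: real assumes x: "x \<ge> 4" and r: "r < 0" "r^2 = (17*x-1)*(x-1)"
  shows "-66/25 < ar x r"
proof -
  have h1: "(25*((x+2)*(-r)))^2 < (107*x^2+207*x-50)^2"
    using P5[OF x] rsq[OF r(2)] unfolding power_mult_distrib[of 25] by simp
  have "0 \<le> 107*x^2" by simp
  then have h2: "0 \<le> 107*x^2+207*x-50" using x by linarith
  have h3: "25*((x+2)*(-r)) < 107*x^2+207*x-50" by (rule sq_lt_imp[OF h1 h2])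
  have e: "-66/25 * (2*x*(x+1)) * 25 = -(x-1)*(x-2)*25 - (107*x^2+207*x-50)" by (simp add: algebra_simps power2_eq_square)
  have m: "(x+2)*(-r) = -((x+2)*r)" by simp
  show ?thesis unfolding ar_gt_iff[OF x] using h3 e m by linarith
qed

lemma ar_4: fixes r :: real assumes r: "r^2 = (17*4-1)*(4-1)"
  shows "r > 0 \<Longrightarrow> 39/20 < ar 4 r" and "r < 0 \<Longrightarrow> ar 4 r < -9/4"
proof -
  have r2: "r^2 = 201" using r by simp
  have e: "ar 4 r = 3/20 * r - 3/20" unfolding ar_def by (simp add: field_simps)
  show "39/20 < ar 4 r" if "r > 0"
  proof -
    have "r > 14" proof (rule ccontr)
      assume "\<not> r > 14" then have "r^2 \<le> 14^2" using that by (intro power_mono) auto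
      with r2 show False by (simp add: power2_eq_square)
    qed
    then show ?thesis unfolding e by linarith
  qed
  show "ar 4 r < -9/4" if "r < 0"
  proof -
    have "-r > 14" proof (rule ccontr)
      assume "\<not> -r > 14" then have "(-r)^2 \<le> 14^2" using that by (intro power_mono) auto
      with r2 show False by (simp add: power2_eq_square)
    qed
    then show ?thesis unfolding e by linarith
  qed
qed

lemma ar_6: fixes r :: real assumes r: "r^2 = (17*6-1)*(6-1)"
  shows "r > 0 \<Longrightarrow> 1895/1000 < ar 6 r \<and> ar 6 r < 1905/1000" and "r < 0 \<Longrightarrow> -243/100 < ar 6 r"
proof -
  have r2: "r^2 = 505" using r by simp
  have e: "ar 6 r = 2/21 * r - 5/21" unfolding ar_def by (simp add: field_simps)
  show "1895/1000 < ar 6 r \<and> ar 6 r < 1905/1000" if "r > 0"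
  proof -
    have a: "r > 224/10" proof (rule ccontr)
      assume "\<not> r > 224/10" then have "r^2 \<le> (224/10)^2" using that by (intro power_mono) auto
      with r2 show False by (simp add: power2_eq_square)
    qed
    have b: "r < 225/10" proof (rule ccontr)
      assume "\<not> r < 225/10" then have "(225/10)^2 \<le> r^2" by (intro power_mono) auto
      with r2 show False by (simp add: power2_eq_square)
    qed
    show ?thesis unfolding e using a b by linarith
  qed
  show "-243/100 < ar 6 r" if "r < 0"
  proof -
    have b: "-r < 23" proof (rule ccontr)
      assume "\<not> -r < 23" then have "23^2 \<le> (-r)^2" by (intro power_mono) auto
      with r2 show False by (simp add: power2_eq_square)
    qed
    show ?thesis unfolding e using b by linarith
  qed
qed


fun Tch :: "nat \<Rightarrow> 'a::comm_ring_1 \<Rightarrow> 'a" where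
  "Tch 0 c = 2"
| "Tch (Suc 0) c = c"
| "Tch (Suc (Suc n)) c = c * Tch (Suc n) c - Tch n c"

lemma Tch_of_real: "Tch d (of_real c) = (of_real (Tch d c) :: complex)"
  by (induction d c rule: Tch.induct) simp_all

lemma Tch_pow2:
  fixes u :: "'a::field"
  assumes u: "u \<noteq> 0"
  shows "u^d + 1/u^d = Tch d (u + 1/u) \<and> u^(Suc d) + 1/u^(Suc d) = Tch (Suc d) (u + 1/u)"
proof (induction d)
  case 0 then show ?case by simp
next
  case (Suc n)
  have "u^(Suc (Suc n)) + 1/u^(Suc (Suc n)) = (u + 1/u) * (u^(Suc n) + 1/u^(Suc n)) - (u^n + 1/u^n)"
    using u by (simp add: field_simps)
  then show ?case using Suc by simp
qed

lemma Tch_pow: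
  fixes u :: "'a::field"
  assumes u: "u \<noteq> 0"
  shows "u^d + 1/u^d = Tch d (u + 1/u)"
  using Tch_pow2[OF u] by blast

lemma Tch_small: "Tch 2 c = c*c - 2" "Tch 3 c = c*(c*c-2) - c" "Tch 4 c = c*(c*(c*c-2)-c) - (c*c-2)"
  by (simp_all add: numeral_eq_Suc)

lemma sgn_pm: fixes s :: complex assumes "s = 1 \<or> s = -1" shows "s * s = 1" "1 / s = s"
  using assms by auto

lemma cheb_quot:
  fixes u :: complex and e sg :: "nat \<Rightarrow> complex" and A B :: "nat \<Rightarrow> nat"
  assumes u: "u \<noteq> 0"
    and form: "\<And>i. i \<le> 3 \<Longrightarrow> e i = sg i * u^(A i) / u^(B i)"
    and sg: "\<And>i. i \<le> 3 \<Longrightarrow> sg i = 1 \<or> sg i = -1"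
    and bd: "\<And>i. i \<le> 3 \<Longrightarrow> A i \<le> M \<and> B i \<le> M'"
    and ijkl: "i \<le> 3" "j \<le> 3" "k \<le> 3" "l \<le> 3"
    and z: "z = e i * e j / (e k * e l)"
  shows "\<exists>d \<le> 2*(M+M'). z + 1/z = (sg i * sg j * sg k * sg l) * Tch d (u + 1/u)"
proof -
  define s where "s = sg i * sg j * sg k * sg l"
  have s: "s = 1 \<or> s = -1" unfolding s_def using sg[OF ijkl(1)] sg[OF ijkl(2)] sg[OF ijkl(3)] sg[OF ijkl(4)]
    by auto
  define P where "P = A i + A j + B k + B l"
  define Q where "Q = B i + B j + A k + A l"
  have PQ: "P \<le> 2*(M+M')" "Q \<le> 2*(M+M')"
    unfolding P_def Q_def using bd[OF ijkl(1)] bd[OF ijkl(2)] bd[OF ijkl(3)] bd[OF ijkl(4)] by auto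
  have sgs: "sg i * sg i = 1" if "i \<le> 3" for i using sg[OF that] by auto
  have zf: "z = s * u^P / u^Q"
  proof -
    have "z = (sg i * u^(A i) / u^(B i)) * (sg j * u^(A j) / u^(B j)) /
              ((sg k * u^(A k) / u^(B k)) * (sg l * u^(A l) / u^(B l)))"
      using z form ijkl by simp
    also have "\<dots> = (sg i * sg j * sg k * sg l) / (sg k * sg k * (sg l * sg l)) *
        (u^(A i) * u^(A j) * u^(B k) * u^(B l)) / (u^(B i) * u^(B j) * u^(A k) * u^(A l))"
      using u sg[OF ijkl(3)] sg[OF ijkl(4)] by (auto simp: field_simps)
    also have "\<dots> = s * u^P / u^Q"
      unfolding s_def P_def Q_def using sgs[OF ijkl(3)] sgs[OF ijkl(4)] by (simp add: power_add)
    finally show ?thesis .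
  qed
  have key: "u^P/u^Q + 1/(u^P/u^Q) = Tch (if Q \<le> P then P - Q else Q - P) (u + 1/u)"
  proof (cases "Q \<le> P")
    case True
    then have "u^P/u^Q = u^(P-Q)" using u by (simp add: power_diff)
    then show ?thesis using True Tch_pow[OF u, of "P-Q"] by simp
  next
    case False
    then have "u^Q/u^P = u^(Q-P)" using u by (simp add: power_diff)
    moreover have "1/(u^P/u^Q) = u^Q/u^P" by simp
    moreover have "u^P/u^Q = 1/(u^Q/u^P)" by simp
    ultimately show ?thesis using False Tch_pow[OF u, of "Q-P"] by (simp add: add.commute)
  qed
  have "z + 1/z = s * (u^P/u^Q + 1/(u^P/u^Q))"
    using zf s by (auto simp: field_simps)
  then have "z + 1/z = s * Tch (if Q \<le> P then P - Q else Q - P) (u + 1/u)" using key by simp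
  moreover have "(if Q \<le> P then P - Q else Q - P) \<le> 2*(M+M')" using PQ by auto
  ultimately show ?thesis unfolding s_def by blast
qed


definition c3r :: "real \<Rightarrow> real" where "c3r x = 2*(x^2-6)/(x^2-4)"
definition c4r :: "real \<Rightarrow> real" where "c4r x = -2*(x^2-2)/x^2"
definition c5r :: "real \<Rightarrow> real" where "c5r x = -2/x"
definition sr :: "real \<Rightarrow> real" where "sr x = 3 - x^2"
definition gbr :: "real \<Rightarrow> real" where "gbr x = (x^3-3*x^2-x+7)/(x^2-2*x-1)"

lemma sq_ge: fixes x :: real assumes "x \<ge> a" "a \<ge> 0" shows "x^2 \<ge> a^2"
  using assms by (intro power_mono) auto

lemma c3_eq: fixes x :: real assumes "x \<ge> 4" shows "c3r x = 2 - 4/(x^2-4)"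
proof -
  have "x^2 \<ge> 4^2" using sq_ge[OF assms] by simp
  then have "x^2 - 4 \<noteq> 0" by simp
  then show ?thesis unfolding c3r_def by (simp add: field_simps)
qed

lemma c3_bnd: fixes x :: real assumes x: "x \<ge> 4"
  shows "5/3 \<le> c3r x" "c3r x < 2" "x \<ge> 8 \<Longrightarrow> 29/15 \<le> c3r x"
proof -
  have x2: "x^2 \<ge> 16" using sq_ge[OF x] by simp
  have "4/(x^2-4) \<le> 4/12" using x2 by (intro divide_left_mono) auto
  then show "5/3 \<le> c3r x" unfolding c3_eq[OF x] by simp
  have "4/(x^2-4) > 0" using x2 by simp
  then show "c3r x < 2" unfolding c3_eq[OF x] by simp
  show "29/15 \<le> c3r x" if "x \<ge> 8"
  proof -
    have "x^2 \<ge> 64" using sq_ge[OF that] by simp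
    then have "4/(x^2-4) \<le> 4/60" by (intro divide_left_mono) auto
    then show ?thesis unfolding c3_eq[OF x] by simp
  qed
qed

lemma c4_eq: fixes x :: real assumes "x \<ge> 4" shows "c4r x = -2 + 4/x^2"
  using assms unfolding c4r_def by (simp add: field_simps)

lemma c4_bnd: fixes x :: real assumes x: "x \<ge> 4"
  shows "-2 < c4r x" "c4r x \<le> -7/4" "x \<ge> 8 \<Longrightarrow> 7/4 \<le> c4r x * c4r x - 2"
proof -
  have x2: "x^2 \<ge> 16" using sq_ge[OF x] by simp
  have "4/x^2 > 0" using x2 x by simp
  then show "-2 < c4r x" unfolding c4_eq[OF x] by simp
  have "4/x^2 \<le> 4/16" using x2 by (intro divide_left_mono) auto
  then show "c4r x \<le> -7/4" unfolding c4_eq[OF x] by simp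
  show "7/4 \<le> c4r x * c4r x - 2" if "x \<ge> 8"
  proof -
    have "x^2 \<ge> 64" using sq_ge[OF that] by simp
    then have h: "4/x^2 \<le> 1/16" "4/x^2 \<ge> 0" by (auto simp: divide_le_eq)
    define t where "t = 4/x^2"
    have "c4r x * c4r x - 2 = 2 - 4*t + t*t" unfolding c4_eq[OF x] t_def[symmetric] by (simp add: algebra_simps)
    moreover have "t * t \<ge> 0" by simp
    ultimately show ?thesis using h unfolding t_def[symmetric] by linarith
  qed
qed

lemma c5_bnd: fixes x :: real assumes x: "x \<ge> 4"
  shows "-1/2 \<le> c5r x" "c5r x < 0" "Tch 3 (c5r x) < 6/x" "c5r x * c5r x - 2 = c4r x"
proof -
  show "-1/2 \<le> c5r x" unfolding c5r_def using x by (simp add: field_simps)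
  show c0: "c5r x < 0" unfolding c5r_def using x by simp
  define c where "c = c5r x"
  have "Tch 3 c = c*c*c - 3*c" unfolding Tch_small by (simp add: algebra_simps)
  moreover have "c*c*c < 0" using c0 unfolding c_def[symmetric] by (simp add: mult_pos_neg mult_neg_neg)
  moreover have "-3*c = 6/x" unfolding c_def c5r_def by simp
  ultimately show "Tch 3 (c5r x) < 6/x" unfolding c_def by linarith
  show "c5r x * c5r x - 2 = c4r x" unfolding c5r_def c4_eq[OF x] by (simp add: power2_eq_square)
qed

lemma gb_bnd: fixes x :: real assumes x: "x \<ge> 4"
  shows "x - 2 < gbr x" "gbr x < x - 1"
proof -
  have h: "x*x \<ge> 4*x" by (rule mult_right_mono) (use x in auto)
  have d: "x^2-2*x-1 > 0" unfolding power2_eq_square using h x by linarith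
  have n: "x^3-3*x^2-x+7 = (x-1)*(x^2-2*x-1) - (2*x-6)" by (simp add: algebra_simps power2_eq_square power3_eq_cube)
  have e: "gbr x = x - 1 - (2*x-6)/(x^2-2*x-1)" unfolding gbr_def n using d
    by (simp add: diff_divide_distrib)
  have "(2*x-6)/(x^2-2*x-1) > 0" using d x by simp
  then show "gbr x < x - 1" unfolding e by simp
  have "x^2 - 4*x + 5 = (x-2)^2 + 1" by (simp add: power2_eq_square algebra_simps)
  moreover have "(x-2)^2 \<ge> 0" by simp
  ultimately have "2*x-6 < x^2-2*x-1" by linarith
  then have "(2*x-6)/(x^2-2*x-1) < 1" using d by simp
  then show "x - 2 < gbr x" unfolding e by simp
qed


lemma d2_cases: "(d::nat) \<le> 2 \<Longrightarrow> d = 0 \<or> d = Suc 0 \<or> d = 2" by auto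
lemma d4_cases: "(d::nat) \<le> 4 \<Longrightarrow> d = 0 \<or> d = Suc 0 \<or> d = 2 \<or> d = 3 \<or> d = 4" by auto

lemma sq_gt: fixes a b :: real assumes "0 \<le> b" "b < a" shows "b*b < a*a"
  using assms by (intro mult_strict_mono) auto

lemma K6_pos:
  fixes x r :: real
  assumes x: "x = 4 \<or> x = 6 \<or> x \<ge> 8" and r: "r > 0" "r^2 = (17*x-1)*(x-1)"
  defines "K \<equiv> ar x r * ar x r - 2"
  shows "x = 4 \<Longrightarrow> 9/5 < K \<and> K < 2" "x = 6 \<Longrightarrow> 159/100 < K \<and> K < 163/100"
    "x \<ge> 8 \<Longrightarrow> 6/x < K \<and> K < 161/100"
proof -
  have x4: "x \<ge> 4" using x by auto
  have a2: "ar x r < 2" by (rule ar_pos_lt2[OF x4 r])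
  show "9/5 < K \<and> K < 2" if h: "x = 4"
  proof -
    have lo: "39/20 < ar x r" using ar_4(1)[of r] r h by simp
    have "(39/20)*(39/20) < ar x r * ar x r" by (rule sq_gt) (use lo in auto)
    moreover have "ar x r * ar x r < 2*2" by (rule sq_gt) (use lo a2 in auto)
    ultimately show ?thesis unfolding K_def by simp
  qed
  show "159/100 < K \<and> K < 163/100" if h: "x = 6"
  proof -
    have lo: "1895/1000 < ar x r" "ar x r < 1905/1000" using ar_6(1)[of r] r h by auto
    have "(1895/1000)*(1895/1000) < ar x r * ar x r" by (rule sq_gt) (use lo in auto)
    moreover have "ar x r * ar x r < (1905/1000)*(1905/1000)" by (rule sq_gt) (use lo in auto)
    ultimately show ?thesis unfolding K_def by simp
  qed
  show "6/x < K \<and> K < 161/100" if h: "x \<ge> 8"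
  proof -
    have x6: "x \<ge> 6" using h by simp
    have lo: "(3*x+4)/(2*x) < ar x r" by (rule ar_pos_gt[OF x6 r])
    have hi: "ar x r < 19/10" by (rule ar_pos_lt19[OF h r])
    have e: "(3*x+4)/(2*x) = 3/2 + 2/x" using h by (simp add: field_simps)
    have p: "2/x > 0" using h by simp
    have "(3/2 + 2/x)*(3/2 + 2/x) < ar x r * ar x r" by (rule sq_gt) (use lo e p in auto)
    moreover have "(3/2 + 2/x)*(3/2 + 2/x) = 9/4 + 6/x + (2/x)*(2/x)" by (simp add: algebra_simps)
    moreover have "(2/x)*(2/x) \<ge> 0" by simp
    moreover have apos: "0 \<le> ar x r" using lo e p by linarith
    moreover have "ar x r * ar x r < (19/10)*(19/10)" by (rule sq_gt) (use apos hi in auto)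
    ultimately show ?thesis unfolding K_def by (intro conjI; linarith)
  qed
qed

lemma K6_neg:
  fixes x r :: real
  assumes x: "x = 4 \<or> x = 6 \<or> x \<ge> 8" and r: "r < 0" "r^2 = (17*x-1)*(x-1)"
  defines "K \<equiv> ar x r * ar x r - 2"
  shows "2 < K" "K < 3106/625" "x = 4 \<Longrightarrow> 49/16 < K" "x = 6 \<Longrightarrow> K < 39049/10000"
proof -
  have x4: "x \<ge> 4" using x by auto
  have hi: "ar x r < -2" by (rule ar_neg_lt[OF x4 r])
  have lo: "-66/25 < ar x r" by (rule ar_neg_gt[OF x4 r])
  have "2*2 < (-ar x r)*(-ar x r)" by (rule sq_gt) (use hi in auto)
  then show "2 < K" unfolding K_def by simp
  have "(-ar x r)*(-ar x r) < (66/25)*(66/25)" by (rule sq_gt) (use hi lo in auto)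
  then show "K < 3106/625" unfolding K_def by simp
  show "49/16 < K" if h: "x = 4"
  proof -
    have "ar x r < -9/4" using ar_4(2)[of r] r h by simp
    then have "(9/4)*(9/4) < (-ar x r)*(-ar x r)" by (intro sq_gt) auto
    then show ?thesis unfolding K_def by simp
  qed
  show "K < 39049/10000" if h: "x = 6"
  proof -
    have "-243/100 < ar x r" using ar_6(2)[of r] r h by simp
    then have "(-ar x r)*(-ar x r) < (243/100)*(243/100)" by (intro sq_gt) (use hi in auto)
    then show ?thesis unfolding K_def by simp
  qed
qed

lemma R34: fixes x :: real assumes x: "x \<ge> 4" and d: "d \<le> 2"
  shows "c3r x * c3r x - 2 \<noteq> Tch d (c4r x)"
proof -
  have b3: "5/3 \<le> c3r x" "c3r x < 2" using c3_bnd[OF x] by auto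
  have b4: "-2 < c4r x" "c4r x \<le> -7/4" using c4_bnd[OF x] by auto
  have s3: "(5/3)*(5/3) \<le> c3r x * c3r x" using b3 by (intro mult_mono) auto
  have s3': "c3r x * c3r x < 2*2" using b3 by (intro sq_gt) auto
  from d2_cases[OF d] show ?thesis
  proof (elim disjE)
    assume "d = 0" then show ?thesis using s3' by simp
  next
    assume "d = Suc 0" then show ?thesis using s3 b4 by simp
  next
    assume d2: "d = 2"
    show ?thesis
    proof
      assume "c3r x * c3r x - 2 = Tch d (c4r x)"
      then have "c3r x * c3r x = c4r x * c4r x" using d2 by (simp add: Tch_small)
      then have "(c3r x - (- c4r x)) * (c3r x + (- c4r x)) = 0" by (simp add: algebra_simps)
      moreover have "c3r x + (- c4r x) > 0" using b3 b4 by simp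
      ultimately have "c3r x = - c4r x" by simp
      then have "4/(x^2-4) = 4/x^2" unfolding c3_eq[OF x] c4_eq[OF x] by simp
      then show False by simp
    qed
  qed
qed


lemma Tch4: "Tch 4 c = Tch 2 (Tch 2 c)"
  by (simp add: Tch_small algebra_simps)

lemma R35: fixes x :: real assumes x: "x \<ge> 4" and d: "d \<le> 2"
  shows "c5r x * c5r x - 2 \<noteq> Tch d (c3r x) \<and> c5r x * c5r x - 2 \<noteq> - Tch d (c3r x)"
proof -
  have e: "c5r x * c5r x - 2 = c4r x" using c5_bnd[OF x] by simp
  have b3: "5/3 \<le> c3r x" "c3r x < 2" using c3_bnd[OF x] by auto
  have b4: "-2 < c4r x" "c4r x \<le> -7/4" using c4_bnd[OF x] by auto
  have s3: "(5/3)*(5/3) \<le> c3r x * c3r x" using b3 by (intro mult_mono) auto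
  have x2: "x^2 \<ge> 16" using sq_ge[OF x] by simp
  define t where "t = 4/(x^2-4)"
  define u where "u = 4/x^2"
  have c3t: "c3r x = 2 - t" unfolding t_def by (rule c3_eq[OF x])
  have c4u: "c4r x = -2 + u" unfolding u_def by (rule c4_eq[OF x])
  have ut: "u < t" unfolding u_def t_def
  proof (rule divide_strict_left_mono)
    show "x^2 - 4 < x^2" by simp
    show "(0::real) < 4" by simp
    show "0 < x^2 * (x^2 - 4)" using x2 by (intro mult_pos_pos) auto
  qed
  have u0: "0 < u" unfolding u_def using x2 x by simp
  have t3: "t \<le> 1/3" unfolding t_def using x2 by (simp add: divide_le_eq)
  from d2_cases[OF d] show ?thesis
  proof (elim disjE)
    assume "d = 0" then show ?thesis using e b4 by simp
  next
    assume "d = Suc 0" then show ?thesis using e b3 b4 c3t c4u ut by auto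
  next
    assume d2: "d = 2"
    have n1: "c4r x \<noteq> c3r x * c3r x - 2" using s3 b4 by simp
    have n2: "c4r x \<noteq> -(c3r x * c3r x - 2)"
    proof
      assume "c4r x = -(c3r x * c3r x - 2)"
      then have "4*t - t*t = u" unfolding c3t c4u by (simp add: algebra_simps)
      moreover have "t*t \<le> t/3" using t3 ut u0 by (simp add: mult_left_le)
      ultimately show False using ut u0 by linarith
    qed
    show ?thesis using n1 n2 e d2 by (simp add: Tch_small)
  qed
qed

lemma R45: fixes x :: real assumes x: "x \<ge> 4" and d: "d \<le> 2"
  shows "c5r x \<noteq> Tch d (c4r x)"
proof -
  have b5: "-1/2 \<le> c5r x" "c5r x < 0" using c5_bnd[OF x] by auto
  have b4: "-2 < c4r x" "c4r x \<le> -7/4" using c4_bnd[OF x] by auto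
  have "(7/4)*(7/4) \<le> (-c4r x)*(-c4r x)" using b4 by (intro mult_mono) auto
  then have s4: "c4r x * c4r x - 2 > 0" by simp
  from d2_cases[OF d] show ?thesis
  proof (elim disjE)
    assume "d = 0" then show ?thesis using b5 by simp
  next
    assume "d = Suc 0" then show ?thesis using b5 b4 by simp
  next
    assume "d = 2" then show ?thesis using b5 s4 by (simp add: Tch_small)
  qed
qed

lemma xcases_ge4: fixes x :: real shows "x = 4 \<or> x = 6 \<or> x \<ge> 8 \<Longrightarrow> x \<ge> 4" by auto

lemma K6_pos_facts:
  fixes x r :: real
  assumes x: "x = 4 \<or> x = 6 \<or> x \<ge> 8" and r: "r > 0" "r^2 = (17*x-1)*(x-1)"
  defines "K \<equiv> ar x r * ar x r - 2"
  shows "0 < K" "K < 2" "6/x < K"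
    "K \<noteq> c3r x" "K \<noteq> c3r x * c3r x - 2" "K \<noteq> c4r x * c4r x - 2"
proof -
  have x4: "x \<ge> 4" using x by auto
  note B = K6_pos[OF x r, folded K_def]
  have c3_4: "c3r 4 = 5/3" and c3_6: "c3r 6 = 15/8" unfolding c3r_def by simp_all
  have c4_4: "c4r 4 = -7/4" and c4_6: "c4r 6 = -17/9" unfolding c4r_def by simp_all
  have "0 < K \<and> K < 2 \<and> 6/x < K \<and> K \<noteq> c3r x \<and> K \<noteq> c3r x * c3r x - 2 \<and> K \<noteq> c4r x * c4r x - 2"
    using x proof (elim disjE)
    assume h: "x = 4"
    show ?thesis using B(1)[OF h] unfolding h c3_4 c4_4 by auto
  next
    assume h: "x = 6"
    show ?thesis using B(2)[OF h] unfolding h c3_6 c4_6 by auto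
  next
    assume h: "x \<ge> 8"
    have k: "6/x < K" "K < 161/100" using B(3)[OF h] by auto
    have p: "6/x > 0" using h by simp
    have c3b: "29/15 \<le> c3r x" using c3_bnd(3)[OF x4 h] .
    have "(29/15)*(29/15) \<le> c3r x * c3r x" using c3b by (intro mult_mono) auto
    then have c3s: "391/225 \<le> c3r x * c3r x - 2" by simp
    have c4s: "7/4 \<le> c4r x * c4r x - 2" using c4_bnd(3)[OF x4 h] .
    show ?thesis using k p c3b c3s c4s by (intro conjI; (linarith | (rule notI, linarith)))
  qed
  then show "0 < K" "K < 2" "6/x < K" "K \<noteq> c3r x" "K \<noteq> c3r x * c3r x - 2" "K \<noteq> c4r x * c4r x - 2"
    by auto
qed

lemma R36: fixes x r :: real
  assumes x: "x = 4 \<or> x = 6 \<or> x \<ge> 8" and r: "r > 0" "r^2 = (17*x-1)*(x-1)" and d: "d \<le> 2"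
  shows "ar x r * ar x r - 2 \<noteq> Tch d (c3r x) \<and> ar x r * ar x r - 2 \<noteq> - Tch d (c3r x)"
proof -
  have x4: "x \<ge> 4" using x by auto
  note F = K6_pos_facts[OF x r]
  have b3: "5/3 \<le> c3r x" using c3_bnd[OF x4] by auto
  have "(5/3)*(5/3) \<le> c3r x * c3r x" using b3 by (intro mult_mono) auto
  then have s3: "c3r x * c3r x - 2 > 0" by simp
  have an: "ar x r \<noteq> 0" using F(1) by auto
  from d2_cases[OF d] show ?thesis
  proof (elim disjE)
    assume "d = 0" then show ?thesis using F(1,2) an by simp
  next
    assume "d = Suc 0" then show ?thesis using F(1,4) b3 by simp
  next
    assume "d = 2" then show ?thesis using F(1,5) s3 by (simp add: Tch_small)
  qed
qed

lemma R46: fixes x r :: real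
  assumes x: "x = 4 \<or> x = 6 \<or> x \<ge> 8" and r: "r > 0" "r^2 = (17*x-1)*(x-1)" and d: "d \<le> 2"
  shows "ar x r * ar x r - 2 \<noteq> Tch d (c4r x)"
proof -
  have x4: "x \<ge> 4" using x by auto
  note F = K6_pos_facts[OF x r]
  have b4: "c4r x \<le> -7/4" using c4_bnd[OF x4] by auto
  from d2_cases[OF d] show ?thesis
  proof (elim disjE)
    assume "d = 0" then show ?thesis using F(2) by simp
  next
    assume "d = Suc 0" then show ?thesis using F(1) b4 by simp
  next
    assume "d = 2" then show ?thesis using F(6) by (simp add: Tch_small)
  qed
qed

lemma R56: fixes x r :: real
  assumes x: "x = 4 \<or> x = 6 \<or> x \<ge> 8" and r: "r > 0" "r^2 = (17*x-1)*(x-1)" and d: "d \<le> 4"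
  shows "ar x r * ar x r - 2 \<noteq> Tch d (c5r x)"
proof -
  have x4: "x \<ge> 4" using x by auto
  note F = K6_pos_facts[OF x r]
  have b5: "c5r x < 0" "Tch 3 (c5r x) < 6/x" "c5r x * c5r x - 2 = c4r x" using c5_bnd[OF x4] by auto
  have b4: "c4r x \<le> -7/4" using c4_bnd[OF x4] by auto
  from d4_cases[OF d] show ?thesis
  proof (elim disjE)
    assume "d = 0" then show ?thesis using F(2) by simp
  next
    assume "d = Suc 0" then show ?thesis using F(1) b5 by simp
  next
    assume "d = 2" then show ?thesis using F(1) b5 b4 by (simp add: Tch_small)
  next
    assume "d = 3" then show ?thesis using F(3) b5 by simp
  next
    assume "d = 4"
    have "Tch 4 (c5r x) = c4r x * c4r x - 2" unfolding Tch4 Tch_small b5(3) by simp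
    then show ?thesis using F(6) \<open>d = 4\<close> by simp
  qed
qed

lemma R16: fixes x r :: real
  assumes x: "x = 4 \<or> x = 6 \<or> x \<ge> 8" and r: "r < 0" "r^2 = (17*x-1)*(x-1)" and d: "d \<le> 2"
  shows "ar x r * ar x r - 2 \<noteq> Tch d (sr x)"
proof -
  have x4: "x \<ge> 4" using x by auto
  note F = K6_neg[OF x r]
  have x2: "x^2 \<ge> 16" using sq_ge[OF x4] by simp
  have s: "sr x \<le> -13" unfolding sr_def using x2 by simp
  have "13*13 \<le> (-sr x)*(-sr x)" using s by (intro mult_mono) auto
  then have ss: "sr x * sr x - 2 \<ge> 167" by simp
  from d2_cases[OF d] show ?thesis
  proof (elim disjE)
    assume "d = 0" then show ?thesis using F(1) by simp
  next
    assume "d = Suc 0" then show ?thesis using F(1) s by simp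
  next
    assume "d = 2" then show ?thesis using F(2) ss by (simp add: Tch_small)
  qed
qed

lemma R12: fixes x :: real assumes x: "x \<ge> 4" and d: "d \<le> 2"
  shows "gbr x * gbr x - 2 \<noteq> Tch d (sr x)"
proof -
  have g: "x - 2 < gbr x" "gbr x < x - 1" using gb_bnd[OF x] by auto
  have x2: "x^2 \<ge> 16" using sq_ge[OF x] by simp
  have s: "sr x \<le> -13" unfolding sr_def using x2 by simp
  have g2: "2*2 < gbr x * gbr x" using g x by (intro sq_gt) auto
  have "gbr x * gbr x < (x-1)*(x-1)" using g x by (intro sq_gt) auto
  moreover have "(x-1)*(x-1) < (-sr x)*(-sr x)"
  proof (rule sq_gt)
    show "0 \<le> x - 1" using x by simp
    have "x*x \<ge> 4*x" by (rule mult_right_mono) (use x in auto)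
    then show "x - 1 < - sr x" unfolding sr_def power2_eq_square using x by linarith
  qed
  ultimately have g3: "gbr x * gbr x < sr x * sr x" by simp
  from d2_cases[OF d] show ?thesis
  proof (elim disjE)
    assume "d = 0" then show ?thesis using g2 by simp
  next
    assume "d = Suc 0" then show ?thesis using g2 s by simp
  next
    assume "d = 2" then show ?thesis using g3 by (simp add: Tch_small)
  qed
qed

lemma R26: fixes x r :: real
  assumes x: "x = 4 \<or> x = 6 \<or> x \<ge> 8" and r: "r < 0" "r^2 = (17*x-1)*(x-1)"
  defines "K \<equiv> ar x r * ar x r - 2"
  shows "K \<noteq> 2" "K \<noteq> gbr x" "K \<noteq> gbr x * gbr x - 2" "K < 25"
proof -
  have x4: "x \<ge> 4" using x by auto
  note F = K6_neg[OF x r, folded K_def]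
  have g: "x - 2 < gbr x" using gb_bnd[OF x4] by auto
  have g4: "gbr 4 = 19/7" and g6: "gbr 6 = 109/23" unfolding gbr_def by simp_all
  show "K \<noteq> 2" using F(1) by simp
  show "K < 25" using F(2) by simp
  have gg: "gbr x > 27/10"
    using x proof (elim disjE)
    assume "x = 4" then show ?thesis using g4 by simp
  next
    assume "x = 6" then show ?thesis using g by simp
  next
    assume "x \<ge> 8" then show ?thesis using g by simp
  qed
  have "(27/10)*(27/10) < gbr x * gbr x" using gg by (intro sq_gt) auto
  then show "K \<noteq> gbr x * gbr x - 2" using F(2) by simp
  show "K \<noteq> gbr x"
    using x proof (elim disjE)
    assume h: "x = 4" then show ?thesis using F(3)[OF h] g4 by simp
  next
    assume h: "x = 6" then show ?thesis using F(4)[OF h] g6 by simp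
  next
    assume "x \<ge> 8" then show ?thesis using g F(2) by simp
  qed
qed


lemma P6:
  fixes x :: real assumes "x \<ge> 4"
  shows "x^2-2*x-1 < (x-3)*(x^2-4) + x - 1"
proof -
  define k where "k = x - 4"
  have k0: "k \<ge> 0" and xk: "x = 4 + k" using assms unfolding k_def by auto
  have "(x-3)*(x^2-4) + x - 1 - (x^2-2*x-1) = 8 + k * (15 + k * (8 + k * (1)))"
    unfolding xk by (simp add: power2_eq_square power3_eq_cube algebra_simps)
  moreover have "0 < 8 + k * (15 + k * (8 + k * (1)))"
    using k0 by (intro hpos hnn) simp_all
  ultimately show ?thesis by simp
qed

lemma P7:
  fixes x :: real assumes "x \<ge> 4"
  shows "5*(x-1) < (x^2-7*x+14)*(x^2-4)"
proof -
  define k where "k = x - 4"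
  have k0: "k \<ge> 0" and xk: "x = 4 + k" using assms unfolding k_def by auto
  have "(x^2-7*x+14)*(x^2-4) - (5*(x-1)) = 9 + k * (23 + k * (22 + k * (9 + k * (1))))"
    unfolding xk by (simp add: power2_eq_square power3_eq_cube algebra_simps)
  moreover have "0 < 9 + k * (23 + k * (22 + k * (9 + k * (1))))"
    using k0 by (intro hpos hnn) simp_all
  ultimately show ?thesis by simp
qed

definition bT :: "real \<Rightarrow> real \<Rightarrow> real" where
  "bT x T = ((x-3)*T + (x-1)) / (x^2-2*x-1)"

lemma D_pos: fixes x :: real assumes x: "x \<ge> 4" shows "x^2-2*x-1 > 0"
proof -
  have h: "x*x \<ge> 4*x" by (rule mult_right_mono) (use x in auto)
  show ?thesis unfolding power2_eq_square using h x by linarith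
qed

lemma bT_big: fixes x T :: real assumes x: "x \<ge> 4" and T: "T > 1" "T + 1/T = x^2 - 3"
  shows "1 < bT x T" "5 * bT x T < T"
proof -
  have D: "x^2-2*x-1 > 0" by (rule D_pos[OF x])
  have "1/T < 1" using T(1) by simp
  then have Tg: "T > x^2 - 4" using T(2) by linarith
  have x3: "x - 3 > 0" using x by simp
  have "(x-3)*(x^2-4) < (x-3)*T" using Tg x3 by simp
  then have "x^2-2*x-1 < (x-3)*T + (x-1)" using P6[OF x] by linarith
  then show "1 < bT x T" unfolding bT_def using D by simp
  have q: "x^2-7*x+14 > 0"
  proof -
    have "x^2-7*x+14 = (x - 7/2)^2 + 7/4" by (simp add: power2_eq_square algebra_simps)
    moreover have "(x - 7/2)^2 \<ge> 0" by simp
    ultimately show ?thesis by linarith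
  qed
  have "(x^2-7*x+14)*(x^2-4) < (x^2-7*x+14)*T" using Tg q by simp
  then have "5*(x-1) < (x^2-7*x+14)*T" using P7[OF x] by linarith
  then have "5*((x-3)*T + (x-1)) < (x^2-2*x-1)*T" by (simp add: algebra_simps power2_eq_square)
  then have "5*((x-3)*T + (x-1))/(x^2-2*x-1) < T" using D by (simp add: pos_divide_less_eq mult.commute)
  then show "5 * bT x T < T" unfolding bT_def by simp
qed

lemma bT_inv: fixes x T :: real assumes x: "x \<ge> 4" and T: "T \<noteq> 0" "T + 1/T = x^2 - 3"
  shows "bT x T * bT x (1/T) = 1"
proof -
  have D: "x^2-2*x-1 > 0" by (rule D_pos[OF x])
  have "((x-3)*T + (x-1)) * ((x-3)*(1/T) + (x-1)) = (x-3)^2 + (x-1)^2 + (x-3)*(x-1)*(T + 1/T)"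
    using T(1) by (simp add: field_simps power2_eq_square)
  also have "\<dots> = (x^2-2*x-1)^2" unfolding T(2) by (simp add: algebra_simps power2_eq_square)
  finally show ?thesis unfolding bT_def using D by (simp add: power2_eq_square)
qed

lemma bT_g: fixes x T :: real assumes x: "x \<ge> 4" and T: "T \<noteq> 0" "T + 1/T = x^2 - 3"
  shows "bT x T + 1 / bT x T = gbr x"
proof -
  have D: "x^2-2*x-1 > 0" by (rule D_pos[OF x])
  have "bT x T \<noteq> 0" using bT_inv[OF x T] by auto
  then have i: "1 / bT x T = bT x (1/T)" using bT_inv[OF x T] by (simp add: field_simps)
  have "bT x T + bT x (1/T) = ((x-3)*(T + 1/T) + 2*(x-1)) / (x^2-2*x-1)"
    unfolding bT_def by (simp add: add_divide_distrib[symmetric] algebra_simps)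
  also have "\<dots> = gbr x" unfolding T(2) gbr_def by (simp add: algebra_simps power2_eq_square power3_eq_cube)
  finally show ?thesis using i by simp
qed

lemma bT_bounds: fixes x T :: real assumes x: "x \<ge> 4" and T: "T > 0" "T + 1/T = x^2 - 3"
  shows "(1 \<le> bT x T \<and> 5 * bT x T < T) \<or> (bT x T \<le> 1 \<and> 5 * T < bT x T)"
proof (cases "T > 1")
  case True then show ?thesis using bT_big[OF x True T(2)] by simp
next
  case False
  have x2: "x^2 \<ge> 16" using sq_ge[OF x] by simp
  have "T \<noteq> 1" using T(2) x2 by auto
  then have T1: "T < 1" using False by simp
  have T': "1/T > 1" using T T1 by simp
  have T'e: "1/T + 1/(1/T) = x^2 - 3" using T(2) by simp
  note B = bT_big[OF x T' T'e]
  have inv: "bT x T * bT x (1/T) = 1" by (rule bT_inv[OF x _ T(2)]) (use T in simp)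
  have bpos: "bT x (1/T) > 0" using B by simp
  have be: "bT x T = 1 / bT x (1/T)" using inv bpos by (simp add: field_simps)
  have "bT x T \<le> 1" unfolding be using B(1) by simp
  moreover have "5 * T < bT x T"
  proof -
    have "5 * bT x (1/T) * T < 1" using B(2) T(1) by (simp add: field_simps)
    then show ?thesis unfolding be using bpos by (simp add: field_simps)
  qed
  ultimately show ?thesis by simp
qed


lemma ratio_Tch:
  fixes u :: "'a::field"
  assumes u: "u \<noteq> 0"
  shows "u^P/u^Q + 1/(u^P/u^Q) = Tch (if Q \<le> P then P - Q else Q - P) (u + 1/u)"
proof (cases "Q \<le> P")
  case True
  then have "u^P/u^Q = u^(P-Q)" using u by (simp add: power_diff)
  then show ?thesis using True Tch_pow[OF u, of "P-Q"] by simp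
next
  case False
  then have "u^Q/u^P = u^(Q-P)" using u by (simp add: power_diff)
  moreover have "1/(u^P/u^Q) = u^Q/u^P" by simp
  moreover have "u^P/u^Q = 1/(u^Q/u^P)" by simp
  ultimately show ?thesis using False Tch_pow[OF u, of "Q-P"] by (simp add: add.commute)
qed

lemma bigT:
  fixes T b :: real
  assumes T: "T > 0" and b: "b > 0" and bd: "(1 \<le> b \<and> 5*b < T) \<or> (b \<le> 1 \<and> 5*T < b)" and k: "k \<le> 2"
  shows "T^2/b^k + 1/(T^2/b^k) > 25"
proof -
  have p1: "T^2/b^k > 0" "1/(T^2/b^k) > 0" using T b by simp_all
  from bd show ?thesis
  proof
    assume h: "1 \<le> b \<and> 5*b < T"
    have "b^k \<le> b^2" using h k by (intro power_increasing) auto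
    then have "T^2/b^2 \<le> T^2/b^k" using b T by (intro divide_left_mono) auto
    moreover have "T^2/b^2 = (T/b)^2" by (simp add: power_divide)
    moreover have "T/b > 5" using h b by (simp add: field_simps)
    then have "(T/b)^2 > 5^2" by (intro power_strict_mono) auto
    ultimately show ?thesis using p1 by simp
  next
    assume h: "b \<le> 1 \<and> 5*T < b"
    have "b^2 \<le> b^k" using h k b by (intro power_decreasing) auto
    then have "b^2/T^2 \<le> b^k/T^2" using b T by (intro divide_right_mono) auto
    moreover have "b^2/T^2 = (b/T)^2" by (simp add: power_divide)
    moreover have "b/T > 5" using h T by (simp add: field_simps)
    then have "(b/T)^2 > 5^2" by (intro power_strict_mono) auto
    moreover have "1/(T^2/b^k) = b^k/T^2" by simp
    ultimately show ?thesis using p1 by simp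
  qed
qed

lemma W2Q:
  fixes T b z :: real and e :: "nat \<Rightarrow> real"
  assumes T: "T > 0" and b: "b > 0" and bd: "(1 \<le> b \<and> 5*b < T) \<or> (b \<le> 1 \<and> 5*T < b)"
    and e: "e 0 = 1" "e 1 = b" "e 2 = b" "e 3 = -T"
    and ijkl: "i \<le> 3" "j \<le> 3" "k \<le> 3" "l \<le> 3"
    and z: "z = e i * e j / (e k * e l)" and zp: "z > 0"
  shows "z + 1/z = 2 \<or> z + 1/z = b + 1/b \<or> z + 1/z = (b + 1/b)*(b + 1/b) - 2 \<or> z + 1/z > 25"
proof -
  define al :: "nat \<Rightarrow> nat" where "al i = (if i = 1 \<or> i = 2 then 1 else 0)" for i
  define be :: "nat \<Rightarrow> nat" where "be i = (if i = 3 then 1 else 0)" for i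
  have form: "e m = (-T)^(be m) * b^(al m)" if "m \<le> 3" for m
  proof -
    have "m = 0 \<or> m = 1 \<or> m = 2 \<or> m = 3" using that by auto
    then show ?thesis unfolding al_def be_def using e by auto
  qed
  have ab: "al m + be m \<le> 1" for m unfolding al_def be_def by auto
  define A1 where "A1 = al i + al j"
  define B1 where "B1 = be i + be j"
  define A2 where "A2 = al k + al l"
  define B2 where "B2 = be k + be l"
  have bnd: "A1 + B1 \<le> 2" "A2 + B2 \<le> 2" unfolding A1_def B1_def A2_def B2_def
    using ab[of i] ab[of j] ab[of k] ab[of l] by auto
  have Tb: "T \<noteq> 0" "b \<noteq> 0" using T b by auto
  define zz where "zz = T^B1 * b^A1 / (T^B2 * b^A2)"
  have zzp: "zz > 0" unfolding zz_def using T b by simp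
  have zf: "z = (-1)^(B1+B2) * zz"
  proof -
    have "z = ((-T)^(be i) * b^(al i)) * ((-T)^(be j) * b^(al j)) / (((-T)^(be k) * b^(al k)) * ((-T)^(be l) * b^(al l)))"
      using z form ijkl by simp
    also have "\<dots> = (-T)^B1 * b^A1 / ((-T)^B2 * b^A2)"
      unfolding A1_def B1_def A2_def B2_def by (simp add: power_add algebra_simps)
    also have "\<dots> = (-1)^B1 * T^B1 * b^A1 / ((-1)^B2 * T^B2 * b^A2)"
      by (simp only: power_minus[of T])
    also have "\<dots> = ((-1)^B1 / (-1)^B2) * zz" unfolding zz_def by (simp add: field_simps)
    also have "(-1)^B1 / (-1)^B2 = ((-1::real)^(B1+B2))"
    proof -
      have "((-1::real)^B2) * (-1)^B2 = 1" by (simp add: power_mult_distrib[symmetric])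
      then have "(-1::real)^B1 / (-1)^B2 = (-1)^B1 * (-1)^B2" by (simp add: field_simps)
      then show ?thesis by (simp add: power_add)
    qed
    finally show ?thesis .
  qed
  have ev: "even (B1 + B2)"
  proof (rule ccontr)
    assume "odd (B1 + B2)"
    then have "z = - zz" unfolding zf by simp
    with zzp zp show False by simp
  qed
  then have zz: "z = zz" unfolding zf by simp
  have B1: "B1 \<le> 2" and B2: "B2 \<le> 2" using bnd by auto
  have Bc: "(B1 = B2) \<or> (B1 = 2 \<and> B2 = 0) \<or> (B1 = 0 \<and> B2 = 2)"
  proof -
    have "B1 = 0 \<or> B1 = 1 \<or> B1 = 2" "B2 = 0 \<or> B2 = 1 \<or> B2 = 2" using B1 B2 by auto
    then show ?thesis using ev by auto
  qed
  then show ?thesis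
  proof (elim disjE)
    assume eq: "B1 = B2"
    have "z = b^A1 / b^A2" unfolding zz zz_def eq using T by simp
    then have "z + 1/z = Tch (if A2 \<le> A1 then A1 - A2 else A2 - A1) (b + 1/b)"
      using ratio_Tch[OF Tb(2), of A1 A2] by simp
    moreover have "(if A2 \<le> A1 then A1 - A2 else A2 - A1) \<le> 2" using bnd by auto
    ultimately obtain d where d: "d \<le> 2" "z + 1/z = Tch d (b + 1/b)" by blast
    from d2_cases[OF d(1)] show ?thesis
    proof (elim disjE)
      assume "d = 0" then show ?thesis using d(2) by simp
    next
      assume "d = Suc 0" then show ?thesis using d(2) by simp
    next
      assume "d = 2" then show ?thesis using d(2) by (simp add: Tch_small)
    qed
  next
    assume h: "B1 = 2 \<and> B2 = 0"
    then have "A1 = 0" using bnd by simp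
    then have "z = T^2/b^A2" unfolding zz zz_def using h by simp
    moreover have "A2 \<le> 2" using bnd by simp
    ultimately show ?thesis using bigT[OF T b bd] by simp
  next
    assume h: "B1 = 0 \<and> B2 = 2"
    then have "A2 = 0" using bnd by simp
    then have "1/z = T^2/b^A1" unfolding zz zz_def using h by simp
    moreover have "A1 \<le> 2" using bnd by simp
    ultimately have "1/z + 1/(1/z) > 25" using bigT[OF T b bd] by simp
    then show ?thesis by (simp add: add.commute)
  qed
qed

lemma nonreal_sq:
  fixes x :: complex and c :: real
  assumes x: "x \<noteq> 0" and e: "x + 1/x = of_real c" and c: "c*c < 4" "c \<noteq> 0"
  shows "x^2 \<notin> \<real>"
proof
  assume "x^2 \<in> \<real>"
  then obtain s where s: "x^2 = of_real s" by (auto elim: Reals_cases)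
  have "x*x + 1 = of_real c * x" using e x by (simp add: field_simps)
  then have "of_real s + 1 = of_real c * x" using s by (simp add: power2_eq_square)
  then have "x = of_real ((s+1)/c)" using c(2) by (simp add: field_simps)
  then obtain \<rho> where rho: "x = of_real \<rho>" by blast
  have rz: "\<rho> \<noteq> 0" using x rho by simp
  have "of_real (\<rho> + 1/\<rho>) = (of_real c :: complex)" using e rho by simp
  then have rc: "\<rho> + 1/\<rho> = c" by (simp only: of_real_eq_iff)
  have "(\<rho> - 1/\<rho>)*(\<rho> - 1/\<rho>) \<ge> 0" by simp
  moreover have "c*c = (\<rho> - 1/\<rho>)*(\<rho> - 1/\<rho>) + 4" unfolding rc[symmetric] using rz by (simp add: field_simps)
  ultimately show False using c(1) by simp
qed

lemma real_of:
  fixes x :: complex and c :: real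
  assumes x: "x \<noteq> 0" and e: "x + 1/x = of_real c" and c: "c*c > 4"
  shows "\<exists>\<rho>. x = of_real \<rho>"
proof -
  define d where "d = sqrt (c*c - 4)"
  have d2: "d*d = c*c - 4" unfolding d_def using c by simp
  have "x*x - of_real c * x + 1 = 0" using e x by (simp add: field_simps)
  moreover have "(x - of_real ((c+d)/2)) * (x - of_real ((c-d)/2)) = x*x - of_real c * x + of_real ((c*c - d*d)/4)"
    by (simp add: field_simps)
  moreover have "(c*c - d*d)/4 = 1" using d2 by simp
  ultimately have "(x - of_real ((c+d)/2)) * (x - of_real ((c-d)/2)) = 0" by simp
  then have "x = of_real ((c+d)/2) \<or> x = of_real ((c-d)/2)" by (simp only: mult_eq_0_iff right_minus_eq)
  then show ?thesis by blast
qed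

lemma realQ:
  fixes e :: "nat \<Rightarrow> complex"
  assumes "\<And>m. m \<le> 3 \<Longrightarrow> e m \<in> \<real>" "i \<le> 3" "j \<le> 3" "k \<le> 3" "l \<le> 3"
  shows "e i * e j / (e k * e l) \<in> \<real>"
  using assms by (intro Reals_divide Reals_mult) auto


lemma ent_simps: "ent w1 w2 w3 0 = 1" "ent w1 w2 w3 1 = w1" "ent w1 w2 w3 2 = w2" "ent w1 w2 w3 3 = w3"
  by (simp_all add: ent_def)

lemma le3_cases: "(m::nat) \<le> 3 \<Longrightarrow> m = 0 \<or> m = 1 \<or> m = 2 \<or> m = 3" by auto

lemma noneq:
  assumes S: "sym_assoc_scheme n 3 A"
    and nzw: "w1 \<noteq> 0" "w2 \<noteq> 0" "w3 \<noteq> 0" and nzv: "v1 \<noteq> 0" "v2 \<noteq> 0" "v3 \<noteq> 0"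
    and zin: "z \<in> CRS n (W_of n A w1 w2 w3)"
    and zout: "\<And>i j k l. i \<le> 3 \<Longrightarrow> j \<le> 3 \<Longrightarrow> k \<le> 3 \<Longrightarrow> l \<le> 3 \<Longrightarrow>
        z \<noteq> ent v1 v2 v3 i * ent v1 v2 v3 j / (ent v1 v2 v3 k * ent v1 v2 v3 l)"
  shows "\<not> typeII_equiv n (W_of n A w1 w2 w3) (W_of n A v1 v2 v3) \<and>
         \<not> typeII_equiv n (W_of n A v1 v2 v3) (W_of n A w1 w2 w3)"
proof -
  have Cw: "W_of n A w1 w2 w3 \<in> carrier_mat n n" and Cv: "W_of n A v1 v2 v3 \<in> carrier_mat n n"
    using W_of_carrier[OF S] by auto
  have Nw: "\<forall>a<n. \<forall>b<n. W_of n A w1 w2 w3 $$ (a,b) \<noteq> 0" using W_of_nz[OF S _ _ nzw] by blast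
  have Nv: "\<forall>a<n. \<forall>b<n. W_of n A v1 v2 v3 $$ (a,b) \<noteq> 0" using W_of_nz[OF S _ _ nzv] by blast
  have notin: "z \<notin> CRS n (W_of n A v1 v2 v3)"
  proof
    assume "z \<in> CRS n (W_of n A v1 v2 v3)"
    from CRS_sub[OF S this] obtain i j k l where "i \<le> 3" "j \<le> 3" "k \<le> 3" "l \<le> 3"
      "z = ent v1 v2 v3 i * ent v1 v2 v3 j / (ent v1 v2 v3 k * ent v1 v2 v3 l)" by blast
    with zout show False by blast
  qed
  show ?thesis
  proof
    show "\<not> typeII_equiv n (W_of n A w1 w2 w3) (W_of n A v1 v2 v3)"
    proof
      assume "typeII_equiv n (W_of n A w1 w2 w3) (W_of n A v1 v2 v3)"
      from equiv_CRS[OF Cw Cv Nv this] zin notin show False by simp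
    qed
    show "\<not> typeII_equiv n (W_of n A v1 v2 v3) (W_of n A w1 w2 w3)"
    proof
      assume "typeII_equiv n (W_of n A v1 v2 v3) (W_of n A w1 w2 w3)"
      from equiv_CRS[OF Cv Cw Nw this] zin notin show False by simp
    qed
  qed
qed

lemma cheb_out_pm:
  fixes u z :: complex and e sg :: "nat \<Rightarrow> complex" and A B :: "nat \<Rightarrow> nat" and K c :: real
  assumes u: "u \<noteq> 0"
    and form: "\<And>i. i \<le> 3 \<Longrightarrow> e i = sg i * u^(A i) / u^(B i)"
    and sg: "\<And>i. i \<le> 3 \<Longrightarrow> sg i = 1 \<or> sg i = -1"
    and bd: "\<And>i. i \<le> 3 \<Longrightarrow> A i \<le> M \<and> B i \<le> M'"
    and zK: "z + 1/z = of_real K" and uc: "u + 1/u = of_real c"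
    and hK: "\<And>d. d \<le> 2*(M+M') \<Longrightarrow> K \<noteq> Tch d c \<and> K \<noteq> - Tch d c"
    and ijkl: "i \<le> 3" "j \<le> 3" "k \<le> 3" "l \<le> 3"
  shows "z \<noteq> e i * e j / (e k * e l)"
proof
  assume z: "z = e i * e j / (e k * e l)"
  obtain d where d: "d \<le> 2*(M+M')" "z + 1/z = (sg i * sg j * sg k * sg l) * Tch d (u + 1/u)"
    using cheb_quot[OF u form sg bd ijkl z] by blast
  have s: "sg i * sg j * sg k * sg l = 1 \<or> sg i * sg j * sg k * sg l = -1"
    using sg[OF ijkl(1)] sg[OF ijkl(2)] sg[OF ijkl(3)] sg[OF ijkl(4)] by auto
  have "of_real K = (sg i * sg j * sg k * sg l) * of_real (Tch d c)"
    using d(2) zK uc Tch_of_real[of d c] by simp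
  then have "K = Tch d c \<or> K = - Tch d c" using s by (auto simp del: of_real_minus simp add: of_real_minus[symmetric])
  with hK[OF d(1)] show False by blast
qed

lemma cheb_out_pos:
  fixes u z :: complex and e :: "nat \<Rightarrow> complex" and A B :: "nat \<Rightarrow> nat" and K c :: real
  assumes u: "u \<noteq> 0"
    and form: "\<And>i. i \<le> 3 \<Longrightarrow> e i = 1 * u^(A i) / u^(B i)"
    and bd: "\<And>i. i \<le> 3 \<Longrightarrow> A i \<le> M \<and> B i \<le> M'"
    and zK: "z + 1/z = of_real K" and uc: "u + 1/u = of_real c"
    and hK: "\<And>d. d \<le> 2*(M+M') \<Longrightarrow> K \<noteq> Tch d c"
    and ijkl: "i \<le> 3" "j \<le> 3" "k \<le> 3" "l \<le> 3"
  shows "z \<noteq> e i * e j / (e k * e l)"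
proof
  assume z: "z = e i * e j / (e k * e l)"
  obtain d where d: "d \<le> 2*(M+M')" "z + 1/z = (1 * 1 * 1 * 1) * Tch d (u + 1/u)"
    using cheb_quot[of u e "\<lambda>_. 1" A B M M', OF u form _ bd ijkl z] by auto
  have "of_real K = (of_real (Tch d c) :: complex)"
    using d(2) zK uc Tch_of_real[of d c] by simp
  then have "K = Tch d c" by (simp only: of_real_eq_iff)
  with hK[OF d(1)] show False by blast
qed

lemma real_out:
  fixes e :: "nat \<Rightarrow> complex"
  assumes "\<And>m. m \<le> 3 \<Longrightarrow> e m \<in> \<real>" and "z \<notin> \<real>" "i \<le> 3" "j \<le> 3" "k \<le> 3" "l \<le> 3"
  shows "z \<noteq> e i * e j / (e k * e l)"
  using realQ[of e i j k l] assms by auto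

lemma ent_real: "v1 \<in> \<real> \<Longrightarrow> v2 \<in> \<real> \<Longrightarrow> v3 \<in> \<real> \<Longrightarrow> m \<le> 3 \<Longrightarrow> ent v1 v2 v3 m \<in> \<real>"
  by (simp add: ent_def)

lemma sq_g: fixes w :: complex assumes "w \<noteq> 0" shows "w^2 + 1/w^2 = (w + 1/w)*(w + 1/w) - 2"
  using assms by (simp add: field_simps power2_eq_square)

lemma sq_in: assumes S: "sym_assoc_scheme n 3 A"
  shows "w1^2 \<in> CRS n (W_of n A w1 w2 w3)" "w2^2 \<in> CRS n (W_of n A w1 w2 w3)" "w3^2 \<in> CRS n (W_of n A w1 w2 w3)"
  using CRS_sq[OF S, of 1 w1 w2 w3] CRS_sq[OF S, of 2 w1 w2 w3] CRS_sq[OF S, of 3 w1 w2 w3] by (simp_all add: ent_def)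


lemma formW1: "i \<le> 3 \<Longrightarrow> ent u u u i = 1 * u^(if i = 0 then 0 else 1) / u^0"
  by (drule le3_cases) (auto simp: ent_def)
lemma formW3: "i \<le> 3 \<Longrightarrow> ent u (-1) u i = (if i = 2 then -1 else 1) * u^(if i = 1 \<or> i = 3 then 1 else 0) / u^0"
  by (drule le3_cases) (auto simp: ent_def)
lemma formW4: "i \<le> 3 \<Longrightarrow> ent 1 u 1 i = 1 * u^(if i = 2 then 1 else 0) / u^0"
  by (drule le3_cases) (auto simp: ent_def)
lemma formW5: "i \<le> 3 \<Longrightarrow> ent u (1/u) 1 i = 1 * u^(if i = 1 then 1 else 0) / u^(if i = 2 then 1 else 0)"
  by (drule le3_cases) (auto simp: ent_def)

lemma sgW3: "i \<le> 3 \<Longrightarrow> (if i = 2 then -1 else 1) = (1::complex) \<or> (if i = 2 then -1 else 1) = (-1::complex)"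
  by auto

lemma zoutW1:
  assumes u: "u \<noteq> 0" and zK: "z + 1/z = of_real K" and uc: "u + 1/u = of_real c"
    and hK: "\<And>d. d \<le> 2 \<Longrightarrow> K \<noteq> Tch d c"
    and ijkl: "i \<le> 3" "j \<le> 3" "k \<le> 3" "l \<le> 3"
  shows "z \<noteq> ent u u u i * ent u u u j / (ent u u u k * ent u u u l)"
proof -
  have bd: "\<And>i. i \<le> 3 \<Longrightarrow> (\<lambda>i. if i = 0 then 0 else 1) i \<le> (1::nat) \<and> (\<lambda>_. 0) i \<le> (0::nat)" by auto
  have hK': "\<And>d. d \<le> 2*(1+0) \<Longrightarrow> K \<noteq> Tch d c" using hK by simp
  show ?thesis
    by (rule cheb_out_pos[where M=1 and M'=0 and A="\<lambda>i. if i = 0 then 0 else 1" and B="\<lambda>_. 0", OF u formW1 bd zK uc hK' ijkl])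
qed

lemma zoutW4:
  assumes u: "u \<noteq> 0" and zK: "z + 1/z = of_real K" and uc: "u + 1/u = of_real c"
    and hK: "\<And>d. d \<le> 2 \<Longrightarrow> K \<noteq> Tch d c"
    and ijkl: "i \<le> 3" "j \<le> 3" "k \<le> 3" "l \<le> 3"
  shows "z \<noteq> ent 1 u 1 i * ent 1 u 1 j / (ent 1 u 1 k * ent 1 u 1 l)"
proof -
  have bd: "\<And>i. i \<le> 3 \<Longrightarrow> (\<lambda>i. if i = 2 then 1 else 0) i \<le> (1::nat) \<and> (\<lambda>_. 0) i \<le> (0::nat)" by auto
  have hK': "\<And>d. d \<le> 2*(1+0) \<Longrightarrow> K \<noteq> Tch d c" using hK by simp
  show ?thesis
    by (rule cheb_out_pos[where M=1 and M'=0 and A="\<lambda>i. if i = 2 then 1 else 0" and B="\<lambda>_. 0", OF u formW4 bd zK uc hK' ijkl])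
qed

lemma zoutW5:
  assumes u: "u \<noteq> 0" and zK: "z + 1/z = of_real K" and uc: "u + 1/u = of_real c"
    and hK: "\<And>d. d \<le> 4 \<Longrightarrow> K \<noteq> Tch d c"
    and ijkl: "i \<le> 3" "j \<le> 3" "k \<le> 3" "l \<le> 3"
  shows "z \<noteq> ent u (1/u) 1 i * ent u (1/u) 1 j / (ent u (1/u) 1 k * ent u (1/u) 1 l)"
proof -
  have bd: "\<And>i. i \<le> 3 \<Longrightarrow> (\<lambda>i. if i = 1 then 1 else 0) i \<le> (1::nat) \<and> (\<lambda>i. if i = 2 then 1 else 0) i \<le> (1::nat)" by auto
  have hK': "\<And>d. d \<le> 2*(1+1) \<Longrightarrow> K \<noteq> Tch d c" using hK by simp
  show ?thesis
    by (rule cheb_out_pos[where M=1 and M'=1 and A="\<lambda>i. if i = 1 then 1 else 0" and B="\<lambda>i. if i = 2 then 1 else 0", OF u formW5 bd zK uc hK' ijkl])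
qed

lemma zoutW3:
  assumes u: "u \<noteq> 0" and zK: "z + 1/z = of_real K" and uc: "u + 1/u = of_real c"
    and hK: "\<And>d. d \<le> 2 \<Longrightarrow> K \<noteq> Tch d c \<and> K \<noteq> - Tch d c"
    and ijkl: "i \<le> 3" "j \<le> 3" "k \<le> 3" "l \<le> 3"
  shows "z \<noteq> ent u (-1) u i * ent u (-1) u j / (ent u (-1) u k * ent u (-1) u l)"
proof -
  have bd: "\<And>i. i \<le> 3 \<Longrightarrow> (\<lambda>i. if i = 1 \<or> i = 3 then 1 else 0) i \<le> (1::nat) \<and> (\<lambda>_. 0) i \<le> (0::nat)" by auto
  have hK': "\<And>d. d \<le> 2*(1+0) \<Longrightarrow> K \<noteq> Tch d c \<and> K \<noteq> - Tch d c" using hK by simp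
  show ?thesis
    by (rule cheb_out_pm[where M=1 and M'=0 and A="\<lambda>i. if i = 1 \<or> i = 3 then 1 else 0" and B="\<lambda>_. 0"
          and sg="\<lambda>i. if i = 2 then -1 else 1", OF u formW3 sgW3 bd zK uc hK' ijkl])
qed

lemma zoutReal:
  assumes "v1 \<in> \<real>" "v2 \<in> \<real>" "v3 \<in> \<real>" "z \<notin> \<real>"
  shows "\<And>i j k l. i \<le> 3 \<Longrightarrow> j \<le> 3 \<Longrightarrow> k \<le> 3 \<Longrightarrow> l \<le> 3 \<Longrightarrow>
        z \<noteq> ent v1 v2 v3 i * ent v1 v2 v3 j / (ent v1 v2 v3 k * ent v1 v2 v3 l)"
  by (rule real_out) (use assms ent_real in auto)

lemma zoutW2:
  fixes T b \<rho> :: real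
  assumes T: "T > 0" and b: "b > 0" and bd: "(1 \<le> b \<and> 5*b < T) \<or> (b \<le> 1 \<and> 5*T < b)"
    and z: "z = complex_of_real (\<rho>^2)" and \<rho>: "\<rho> \<noteq> 0"
    and hK: "\<rho>^2 + 1/\<rho>^2 \<noteq> 2" "\<rho>^2 + 1/\<rho>^2 \<noteq> b + 1/b"
       "\<rho>^2 + 1/\<rho>^2 \<noteq> (b + 1/b)*(b + 1/b) - 2" "\<rho>^2 + 1/\<rho>^2 < 25"
  shows "\<And>i j k l. i \<le> 3 \<Longrightarrow> j \<le> 3 \<Longrightarrow> k \<le> 3 \<Longrightarrow> l \<le> 3 \<Longrightarrow>
        z \<noteq> ent (of_real b) (of_real b) (of_real (-T)) i * ent (of_real b) (of_real b) (of_real (-T)) j /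
            (ent (of_real b) (of_real b) (of_real (-T)) k * ent (of_real b) (of_real b) (of_real (-T)) l)"
proof
  fix i j k l :: nat assume ijkl: "i \<le> 3" "j \<le> 3" "k \<le> 3" "l \<le> 3"
  define er :: "nat \<Rightarrow> real" where "er m = (if m = 1 then b else if m = 2 then b else if m = 3 then -T else 1)" for m
  have ee: "ent (complex_of_real b) (of_real b) (of_real (-T)) m = of_real (er m)" for m
    unfolding er_def ent_def by simp
  assume "z = ent (of_real b) (of_real b) (of_real (-T)) i * ent (of_real b) (of_real b) (of_real (-T)) j /
            (ent (of_real b) (of_real b) (of_real (-T)) k * ent (of_real b) (of_real b) (of_real (-T)) l)"
  then have "complex_of_real (\<rho>^2) = of_real (er i * er j / (er k * er l))" unfolding ee z by simp
  then have zr: "\<rho>^2 = er i * er j / (er k * er l)" by (simp only: of_real_eq_iff)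
  have "\<rho>^2 > 0" using \<rho> by simp
  from W2Q[OF T b bd _ _ _ _ ijkl zr this] hK show False unfolding er_def by simp
qed


lemma Reals_a: "a01 q r \<in> \<real>" "a02 q r \<in> \<real>" "a03 q r \<in> \<real>" "a12 q r \<in> \<real>" "a13 q r \<in> \<real>"
  unfolding a01_def a02_def a03_def a12_def a13_def Let_def
  by (auto intro!: Reals_divide Reals_mult Reals_add Reals_diff Reals_minus Reals_power Reals_of_nat Reals_of_real)

lemma sub_eq: fixes a b :: complex assumes "a + b - 3 = 0" shows "a = 3 - b"
proof -
  have "a = (a + b - 3) + (3 - b)" by simp
  then show ?thesis using assms by simp
qed

lemma sq_gr: fixes w :: complex and c :: real assumes "w \<noteq> 0" "w + 1/w = of_real c"
  shows "w^2 + 1/w^2 = of_real (c*c - 2)"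
  using sq_g[OF assms(1)] assms(2) by simp

lemma neg_sq_lt4: fixes c :: real assumes "-2 < c" "c < 2" shows "c*c < 4"
proof (cases "c \<ge> 0")
  case True then have "c*c < 2*2" using assms by (intro sq_gt) auto
  then show ?thesis by simp
next
  case False then have "(-c)*(-c) < 2*2" using assms by (intro sq_gt) auto
  then show ?thesis by simp
qed

theorem proposition5p5:
  fixes q :: nat and A :: "nat \<Rightarrow> complex mat" and w :: "nat \<Rightarrow> nat \<Rightarrow> complex" and r :: real
  assumes "even q" and "q \<ge> 4"
    and "sym_assoc_scheme (q^2 - 1) 3 A"
    and "first_eigenmatrix (q^2 - 1) 3 A (P_q q)"
    and "\<forall>m\<in>{1..6}. \<forall>k\<in>{1,2,3}. w m k \<noteq> 0"
    and c1: "w 1 1 = w 1 2 \<and> w 1 2 = w 1 3 \<and> w 1 3 + 1 / w 1 3 + of_nat q ^ 2 - 3 = 0"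
    and c2: "w 2 3 + 1 / w 2 3 + of_nat q ^ 2 - 3 = 0 \<and>
             w 2 1 = (-(of_nat q - 3) * w 2 3 + (of_nat q - 1)) / (of_nat q ^ 2 - 2 * of_nat q - 1) \<and>
             w 2 2 = w 2 1"
    and c3: "w 3 1 + 1 / w 3 1 = 2 * (of_nat q ^ 2 - 6) / (of_nat q ^ 2 - 4) \<and> w 3 2 = -1 \<and> w 3 3 = w 3 1"
    and c4: "w 4 1 = 1 \<and> w 4 3 = 1 \<and> w 4 2 + 1 / w 4 2 = -2 * (of_nat q ^ 2 - 2) / of_nat q ^ 2"
    and c5: "w 5 1 + 1 / w 5 1 = -2 / of_nat q \<and> w 5 2 = 1 / w 5 1 \<and> w 5 3 = 1"
    and c6: "r^2 = (17 * real q - 1) * (real q - 1) \<and>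
             w 6 1 + 1 / w 6 1 = a01 q r \<and>
             w 6 2 = (w 6 1 ^ 2 - 1) / (a12 q r * w 6 1 - a02 q r) \<and>
             w 6 3 = (w 6 1 ^ 2 - 1) / (a13 q r * w 6 1 - a03 q r)"
  shows "\<forall>m\<in>{1..6::nat}. \<forall>m'\<in>{1..6::nat}. m \<noteq> m' \<longrightarrow>
           \<not> typeII_equiv (q^2 - 1) (W_of (q^2 - 1) A (w m 1) (w m 2) (w m 3))
                                    (W_of (q^2 - 1) A (w m' 1) (w m' 2) (w m' 3))"

proof -
  define n where "n = q^2 - 1"
  define x where "x = real q"
  have S: "sym_assoc_scheme n 3 A" using assms(3) unfolding n_def .
  have F: "first_eigenmatrix n 3 A (P_q q)" using assms(4) unfolding n_def .
  have q4: "q \<ge> 4" using assms(2) .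
  have "q \<noteq> 5" "q \<noteq> 7" using assms(1) by auto
  then have qc: "q = 4 \<or> q = 6 \<or> q \<ge> 8" using q4 by auto
  have xc: "x = 4 \<or> x = 6 \<or> x \<ge> 8" using qc unfolding x_def by auto
  have x4: "x \<ge> 4" using q4 unfolding x_def by simp
  have xq: "(of_nat q :: complex) = of_real x" unfolding x_def by simp
  have nz: "\<And>m k. m \<in> {1..6} \<Longrightarrow> k \<in> {1,2,3} \<Longrightarrow> w m k \<noteq> 0" using assms(5) by blast
  have x2: "x^2 \<ge> 16" using sq_ge[OF x4] by simp
  have sr13: "sr x \<le> -13" unfolding sr_def using x2 by simp
  have "13*13 \<le> (-sr x)*(-sr x)" using sr13 by (intro mult_mono) auto
  then have srsq: "sr x * sr x > 4" by simp
  define u1 where "u1 = w 1 3"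
  have u1nz: "u1 \<noteq> 0" unfolding u1_def using nz by simp
  have W1e: "W_of n A (w 1 1) (w 1 2) (w 1 3) = W_of n A u1 u1 u1" using c1 unfolding u1_def by simp
  have u1c: "u1 + 1/u1 = of_real (sr x)"
  proof -
    have "u1 + 1/u1 = 3 - of_nat q ^ 2" using sub_eq[of "u1 + 1/u1" "of_nat q ^ 2"] c1 unfolding u1_def by simp
    then show ?thesis unfolding sr_def xq by simp
  qed
  have u1r: "u1 \<in> \<real>" using real_of[OF u1nz u1c srsq] by auto
  have t2nz: "w 2 3 \<noteq> 0" using nz by simp
  have t2c: "w 2 3 + 1 / w 2 3 = of_real (sr x)"
  proof -
    have "w 2 3 + 1 / w 2 3 = 3 - of_nat q ^ 2" using sub_eq[of "w 2 3 + 1 / w 2 3" "of_nat q ^ 2"] c2 by simp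
    then show ?thesis unfolding sr_def xq by simp
  qed
  obtain \<rho> where rho: "w 2 3 = of_real \<rho>" using real_of[OF t2nz t2c srsq] by blast
  have rhonz: "\<rho> \<noteq> 0" using t2nz rho by simp
  have rhoc: "\<rho> + 1/\<rho> = sr x"
  proof -
    have "of_real (\<rho> + 1/\<rho>) = (of_real (sr x) :: complex)" using t2c rho by simp
    then show ?thesis by (simp only: of_real_eq_iff)
  qed
  have rhoneg: "\<rho> < 0"
  proof (rule ccontr)
    assume "\<not> \<rho> < 0" then have "\<rho> > 0" using rhonz by simp
    then have "\<rho> + 1/\<rho> > 0" by (simp add: add_pos_pos)
    with rhoc sr13 show False by simp
  qed
  define T where "T = - \<rho>"
  have Tpos: "T > 0" unfolding T_def using rhoneg by simp
  have Tc: "T + 1/T = x^2 - 3" unfolding T_def using rhoc unfolding sr_def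
    by (simp add: minus_divide_right[symmetric])
  define b where "b = bT x T"
  have bbd: "(1 \<le> b \<and> 5*b < T) \<or> (b \<le> 1 \<and> 5*T < b)" unfolding b_def by (rule bT_bounds[OF x4 Tpos Tc])
  have bpos: "b > 0" using bbd Tpos by auto
  have bg: "b + 1/b = gbr x" unfolding b_def by (rule bT_g[OF x4 _ Tc]) (use Tpos in simp)
  have b2e: "w 2 1 = of_real b"
  proof -
    have "w 2 1 = (-(of_nat q - 3) * w 2 3 + (of_nat q - 1)) / (of_nat q ^ 2 - 2 * of_nat q - 1)" using c2 by simp
    also have "\<dots> = of_real (((x-3)*T + (x-1)) / (x^2 - 2*x - 1))" unfolding xq rho T_def by (simp add: algebra_simps)
    finally show ?thesis unfolding b_def bT_def .
  qed
  have W2e: "W_of n A (w 2 1) (w 2 2) (w 2 3) = W_of n A (of_real b) (of_real b) (of_real (-T))"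
    using c2 b2e rho unfolding T_def by simp
  have bnz: "(of_real b :: complex) \<noteq> 0" using bpos by simp
  have Tnz: "(of_real (-T) :: complex) \<noteq> 0" using Tpos by simp
  have bc: "of_real b + 1 / of_real b = (of_real (gbr x) :: complex)" using bg
    by (metis of_real_1 of_real_add of_real_divide)
  define z3 where "z3 = w 3 1"
  have z3nz: "z3 \<noteq> 0" unfolding z3_def using nz by simp
  have W3e: "W_of n A (w 3 1) (w 3 2) (w 3 3) = W_of n A z3 (-1) z3" using c3 unfolding z3_def by simp
  have z3c: "z3 + 1/z3 = of_real (c3r x)" using c3 unfolding z3_def c3r_def xq by simp
  have b3: "5/3 \<le> c3r x" "c3r x < 2" using c3_bnd[OF x4] by auto
  have z3sq: "z3^2 \<notin> \<real>" by (rule nonreal_sq[OF z3nz z3c]) (use b3 neg_sq_lt4[of "c3r x"] in auto)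
  define u4 where "u4 = w 4 2"
  have u4nz: "u4 \<noteq> 0" unfolding u4_def using nz by simp
  have W4e: "W_of n A (w 4 1) (w 4 2) (w 4 3) = W_of n A 1 u4 1" using c4 unfolding u4_def by simp
  have u4c: "u4 + 1/u4 = of_real (c4r x)" using c4 unfolding u4_def c4r_def xq by simp
  have b4: "-2 < c4r x" "c4r x \<le> -7/4" using c4_bnd[OF x4] by auto
  have u4sq: "u4^2 \<notin> \<real>" by (rule nonreal_sq[OF u4nz u4c]) (use b4 neg_sq_lt4[of "c4r x"] in auto)
  define v5 where "v5 = w 5 1"
  have v5nz: "v5 \<noteq> 0" unfolding v5_def using nz by simp
  have W5e: "W_of n A (w 5 1) (w 5 2) (w 5 3) = W_of n A v5 (1/v5) 1" using c5 unfolding v5_def by simp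
  have v5c: "v5 + 1/v5 = of_real (c5r x)" using c5 unfolding v5_def c5r_def xq by simp
  have b5: "-1/2 \<le> c5r x" "c5r x < 0" using c5_bnd[OF x4] by auto
  have v5sq: "v5^2 \<notin> \<real>" by (rule nonreal_sq[OF v5nz v5c]) (use b5 neg_sq_lt4[of "c5r x"] in auto)
  define a6 where "a6 = w 6 1"
  have a6nz: "a6 \<noteq> 0" unfolding a6_def using nz by simp
  have r2: "r^2 = (17*x-1)*(x-1)" using c6 unfolding x_def by simp
  have a6c: "a6 + 1/a6 = of_real (ar x r)" using c6 unfolding a6_def a01_def ar_def Let_def xq by simp
  have rnz: "r \<noteq> 0"
  proof
    assume "r = 0" then have "(17*x-1)*(x-1) = 0" using r2 by simp
    with x4 show False by simp
  qed
  have m1: "(-1::complex) \<noteq> 0" and one: "(1::complex) \<noteq> 0" and v5inz: "1/v5 \<noteq> 0" using v5nz by auto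
  have w62nz: "w 6 2 \<noteq> 0" and w63nz: "w 6 3 \<noteq> 0" using nz by auto
  have Rb: "(of_real b :: complex) \<in> \<real>" "(of_real (-T) :: complex) \<in> \<real>" by auto
  note SQ = sq_in[OF S]
  have p12: "\<not> typeII_equiv n (W_of n A (of_real b) (of_real b) (of_real (-T))) (W_of n A u1 u1 u1) \<and>
             \<not> typeII_equiv n (W_of n A u1 u1 u1) (W_of n A (of_real b) (of_real b) (of_real (-T)))"
    by (rule noneq[OF S bnz bnz Tnz u1nz u1nz u1nz SQ(1) zoutW1[OF u1nz sq_gr[OF bnz bc] u1c R12[OF x4]]])
  have p13: "\<not> typeII_equiv n (W_of n A z3 (-1) z3) (W_of n A u1 u1 u1) \<and>
             \<not> typeII_equiv n (W_of n A u1 u1 u1) (W_of n A z3 (-1) z3)"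
    by (rule noneq[OF S z3nz m1 z3nz u1nz u1nz u1nz SQ(1) zoutReal[OF u1r u1r u1r z3sq]])
  have p14: "\<not> typeII_equiv n (W_of n A 1 u4 1) (W_of n A u1 u1 u1) \<and>
             \<not> typeII_equiv n (W_of n A u1 u1 u1) (W_of n A 1 u4 1)"
    by (rule noneq[OF S one u4nz one u1nz u1nz u1nz SQ(2) zoutReal[OF u1r u1r u1r u4sq]])
  have p15: "\<not> typeII_equiv n (W_of n A v5 (1/v5) 1) (W_of n A u1 u1 u1) \<and>
             \<not> typeII_equiv n (W_of n A u1 u1 u1) (W_of n A v5 (1/v5) 1)"
    by (rule noneq[OF S v5nz v5inz one u1nz u1nz u1nz SQ(1) zoutReal[OF u1r u1r u1r v5sq]])
  have p23: "\<not> typeII_equiv n (W_of n A z3 (-1) z3) (W_of n A (of_real b) (of_real b) (of_real (-T))) \<and>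
             \<not> typeII_equiv n (W_of n A (of_real b) (of_real b) (of_real (-T))) (W_of n A z3 (-1) z3)"
    by (rule noneq[OF S z3nz m1 z3nz bnz bnz Tnz SQ(1) zoutReal[OF Rb(1) Rb(1) Rb(2) z3sq]])
  have p24: "\<not> typeII_equiv n (W_of n A 1 u4 1) (W_of n A (of_real b) (of_real b) (of_real (-T))) \<and>
             \<not> typeII_equiv n (W_of n A (of_real b) (of_real b) (of_real (-T))) (W_of n A 1 u4 1)"
    by (rule noneq[OF S one u4nz one bnz bnz Tnz SQ(2) zoutReal[OF Rb(1) Rb(1) Rb(2) u4sq]])
  have p25: "\<not> typeII_equiv n (W_of n A v5 (1/v5) 1) (W_of n A (of_real b) (of_real b) (of_real (-T))) \<and>
             \<not> typeII_equiv n (W_of n A (of_real b) (of_real b) (of_real (-T))) (W_of n A v5 (1/v5) 1)"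
    by (rule noneq[OF S v5nz v5inz one bnz bnz Tnz SQ(1) zoutReal[OF Rb(1) Rb(1) Rb(2) v5sq]])
  have p34: "\<not> typeII_equiv n (W_of n A z3 (-1) z3) (W_of n A 1 u4 1) \<and>
             \<not> typeII_equiv n (W_of n A 1 u4 1) (W_of n A z3 (-1) z3)"
    by (rule noneq[OF S z3nz m1 z3nz one u4nz one SQ(1) zoutW4[OF u4nz sq_gr[OF z3nz z3c] u4c R34[OF x4]]])
  have p35: "\<not> typeII_equiv n (W_of n A v5 (1/v5) 1) (W_of n A z3 (-1) z3) \<and>
             \<not> typeII_equiv n (W_of n A z3 (-1) z3) (W_of n A v5 (1/v5) 1)"
    by (rule noneq[OF S v5nz v5inz one z3nz m1 z3nz SQ(1) zoutW3[OF z3nz sq_gr[OF v5nz v5c] z3c R35[OF x4]]])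
  have t5: "1/v5 + 1/(1/v5) = of_real (c5r x)" using v5c by (simp add: add.commute)
  have p45: "\<not> typeII_equiv n (W_of n A v5 (1/v5) 1) (W_of n A 1 u4 1) \<and>
             \<not> typeII_equiv n (W_of n A 1 u4 1) (W_of n A v5 (1/v5) 1)"
    by (rule noneq[OF S v5nz v5inz one one u4nz one CRS_tri[OF S F q4 v5nz] zoutW4[OF u4nz t5 u4c R45[OF x4]]])
  have p6: "(\<not> typeII_equiv n (W_of n A a6 (w 6 2) (w 6 3)) (W_of n A u1 u1 u1) \<and>
             \<not> typeII_equiv n (W_of n A u1 u1 u1) (W_of n A a6 (w 6 2) (w 6 3))) \<and>
            (\<not> typeII_equiv n (W_of n A a6 (w 6 2) (w 6 3)) (W_of n A (of_real b) (of_real b) (of_real (-T))) \<and>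
             \<not> typeII_equiv n (W_of n A (of_real b) (of_real b) (of_real (-T))) (W_of n A a6 (w 6 2) (w 6 3))) \<and>
            (\<not> typeII_equiv n (W_of n A a6 (w 6 2) (w 6 3)) (W_of n A z3 (-1) z3) \<and>
             \<not> typeII_equiv n (W_of n A z3 (-1) z3) (W_of n A a6 (w 6 2) (w 6 3))) \<and>
            (\<not> typeII_equiv n (W_of n A a6 (w 6 2) (w 6 3)) (W_of n A 1 u4 1) \<and>
             \<not> typeII_equiv n (W_of n A 1 u4 1) (W_of n A a6 (w 6 2) (w 6 3))) \<and>
            (\<not> typeII_equiv n (W_of n A a6 (w 6 2) (w 6 3)) (W_of n A v5 (1/v5) 1) \<and>
             \<not> typeII_equiv n (W_of n A v5 (1/v5) 1) (W_of n A a6 (w 6 2) (w 6 3)))"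
  proof (cases "r > 0")
    case True
    note F6 = K6_pos_facts[OF xc True r2]
    have aa: "ar x r * ar x r < 4" "ar x r \<noteq> 0" using F6(1,2) by auto
    have a6sq: "a6^2 \<notin> \<real>" by (rule nonreal_sq[OF a6nz a6c aa])
    have g6: "a6^2 + 1/a6^2 = of_real (ar x r * ar x r - 2)" by (rule sq_gr[OF a6nz a6c])
    show ?thesis
    proof (intro conjI)
      show "\<not> typeII_equiv n (W_of n A a6 (w 6 2) (w 6 3)) (W_of n A u1 u1 u1)"
        "\<not> typeII_equiv n (W_of n A u1 u1 u1) (W_of n A a6 (w 6 2) (w 6 3))"
        using noneq[OF S a6nz w62nz w63nz u1nz u1nz u1nz SQ(1) zoutReal[OF u1r u1r u1r a6sq]] by auto
      show "\<not> typeII_equiv n (W_of n A a6 (w 6 2) (w 6 3)) (W_of n A (of_real b) (of_real b) (of_real (-T)))"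
        "\<not> typeII_equiv n (W_of n A (of_real b) (of_real b) (of_real (-T))) (W_of n A a6 (w 6 2) (w 6 3))"
        using noneq[OF S a6nz w62nz w63nz bnz bnz Tnz SQ(1) zoutReal[OF Rb(1) Rb(1) Rb(2) a6sq]] by auto
      show "\<not> typeII_equiv n (W_of n A a6 (w 6 2) (w 6 3)) (W_of n A z3 (-1) z3)"
        "\<not> typeII_equiv n (W_of n A z3 (-1) z3) (W_of n A a6 (w 6 2) (w 6 3))"
        using noneq[OF S a6nz w62nz w63nz z3nz m1 z3nz SQ(1) zoutW3[OF z3nz g6 z3c R36[OF xc True r2]]] by auto
      show "\<not> typeII_equiv n (W_of n A a6 (w 6 2) (w 6 3)) (W_of n A 1 u4 1)"
        "\<not> typeII_equiv n (W_of n A 1 u4 1) (W_of n A a6 (w 6 2) (w 6 3))"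
        using noneq[OF S a6nz w62nz w63nz one u4nz one SQ(1) zoutW4[OF u4nz g6 u4c R46[OF xc True r2]]] by auto
      show "\<not> typeII_equiv n (W_of n A a6 (w 6 2) (w 6 3)) (W_of n A v5 (1/v5) 1)"
        "\<not> typeII_equiv n (W_of n A v5 (1/v5) 1) (W_of n A a6 (w 6 2) (w 6 3))"
        using noneq[OF S a6nz w62nz w63nz v5nz v5inz one SQ(1) zoutW5[OF v5nz g6 v5c R56[OF xc True r2]]] by auto
    qed
  next
    case False
    then have rneg: "r < 0" using rnz by simp
    note F6 = K6_neg[OF xc rneg r2]
    have aa: "ar x r * ar x r > 4" using F6(1) by simp
    obtain \<alpha> where al: "a6 = of_real \<alpha>" using real_of[OF a6nz a6c aa] by blast
    have alnz: "\<alpha> \<noteq> 0" using al a6nz by simp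
    have a6r: "a6 \<in> \<real>" using al by simp
    have w62r: "w 6 2 \<in> \<real>" using c6 a6r Reals_a[of q r]
      unfolding a6_def by (auto intro!: Reals_divide Reals_mult Reals_diff Reals_power)
    have w63r: "w 6 3 \<in> \<real>" using c6 a6r Reals_a[of q r]
      unfolding a6_def by (auto intro!: Reals_divide Reals_mult Reals_diff Reals_power)
    have g6: "a6^2 + 1/a6^2 = of_real (ar x r * ar x r - 2)" by (rule sq_gr[OF a6nz a6c])
    show ?thesis
    proof (intro conjI)
      show "\<not> typeII_equiv n (W_of n A a6 (w 6 2) (w 6 3)) (W_of n A u1 u1 u1)"
        "\<not> typeII_equiv n (W_of n A u1 u1 u1) (W_of n A a6 (w 6 2) (w 6 3))"
        using noneq[OF S a6nz w62nz w63nz u1nz u1nz u1nz SQ(1) zoutW1[OF u1nz g6 u1c R16[OF xc rneg r2]]] by auto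
      have alc: "\<alpha>^2 + 1/\<alpha>^2 = ar x r * ar x r - 2"
      proof -
        have "of_real (\<alpha>^2 + 1/\<alpha>^2) = (of_real (ar x r * ar x r - 2) :: complex)" using g6 al by simp
        then show ?thesis by (simp only: of_real_eq_iff)
      qed
      note R = R26[OF xc rneg r2]
      have z6: "a6^2 = of_real (\<alpha>^2)" using al by simp
      show "\<not> typeII_equiv n (W_of n A a6 (w 6 2) (w 6 3)) (W_of n A (of_real b) (of_real b) (of_real (-T)))"
        "\<not> typeII_equiv n (W_of n A (of_real b) (of_real b) (of_real (-T))) (W_of n A a6 (w 6 2) (w 6 3))"
        using noneq[OF S a6nz w62nz w63nz bnz bnz Tnz SQ(1) zoutW2[OF Tpos bpos bbd z6 alnz]] R alc bg by auto
      show "\<not> typeII_equiv n (W_of n A a6 (w 6 2) (w 6 3)) (W_of n A z3 (-1) z3)"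
        "\<not> typeII_equiv n (W_of n A z3 (-1) z3) (W_of n A a6 (w 6 2) (w 6 3))"
        using noneq[OF S z3nz m1 z3nz a6nz w62nz w63nz SQ(1) zoutReal[OF a6r w62r w63r z3sq]] by auto
      show "\<not> typeII_equiv n (W_of n A a6 (w 6 2) (w 6 3)) (W_of n A 1 u4 1)"
        "\<not> typeII_equiv n (W_of n A 1 u4 1) (W_of n A a6 (w 6 2) (w 6 3))"
        using noneq[OF S one u4nz one a6nz w62nz w63nz SQ(2) zoutReal[OF a6r w62r w63r u4sq]] by auto
      show "\<not> typeII_equiv n (W_of n A a6 (w 6 2) (w 6 3)) (W_of n A v5 (1/v5) 1)"
        "\<not> typeII_equiv n (W_of n A v5 (1/v5) 1) (W_of n A a6 (w 6 2) (w 6 3))"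
        using noneq[OF S v5nz v5inz one a6nz w62nz w63nz SQ(1) zoutReal[OF a6r w62r w63r v5sq]] by auto
    qed
  qed
  have E6: "W_of n A (w 6 1) (w 6 2) (w 6 3) = W_of n A a6 (w 6 2) (w 6 3)" unfolding a6_def ..
  show ?thesis
    unfolding n_def[symmetric]
  proof (intro ballI impI)
    fix m m' :: nat assume m: "m \<in> {1..6}" and m': "m' \<in> {1..6}" and ne: "m \<noteq> m'"
    have mc: "m = 1 \<or> m = 2 \<or> m = 3 \<or> m = 4 \<or> m = 5 \<or> m = 6" using m by auto
    have mc': "m' = 1 \<or> m' = 2 \<or> m' = 3 \<or> m' = 4 \<or> m' = 5 \<or> m' = 6" using m' by auto
    show "\<not> typeII_equiv n (W_of n A (w m 1) (w m 2) (w m 3)) (W_of n A (w m' 1) (w m' 2) (w m' 3))"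
      using mc mc' ne p12 p13 p14 p15 p23 p24 p25 p34 p35 p45 p6
      by (elim disjE; simp only: W1e W2e W3e W4e W5e E6; simp)
  qed
qed


end
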